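(* Assume in addition that $R(A_3)$ is closed. Let $f\in R(A_2^* )$, $g\in R(A_1^* )$, $k\in K_2$, let $x\in\tilde D_2:=\{\xi\in D(A_2)\cap D(A_1^* ):A_2\xi\in D(A_2^* )\}$ be the unique solution of $A_2^*A_2x=f$, $A_1^*x=g$, $\pi_2x=k$, put $y:=A_2x$, and let $(\tilde x,\tilde y)\in H_2\times H_3$. Set $e:=x-\tilde x$, $h:=y-\tilde y$, $e_{A_1}:=\pi_{A_1}e$, $e_{A_2^*}:=\pi_{A_2^*}e$, $e_{K_2}:=\pi_2e$, $h_{A_2}:=\pi_{A_2}h$, $h_{A_3^*}:=\pi_{A_3^*}h$, $h_{K_3}:=\pi_3h$. Then: (i) $e=e_{A_1}+e_{K_2}+e_{A_2^*}\in R(A_1)\oplus K_2\oplus R(A_2^* )$, $h=h_{A_2}+h_{K_3}+h_{A_3^*}\in R(A_2)\oplus K_3\oplus R(A_3^* )$, with $\|e\|^2_{H_2}=\|e_{A_1}\|^2+\|e_{K_2}\|^2+\|e_{A_2^*}\|^2$ and $\|h\|^2_{H_3}=\|h_{A_2}\|^2+\|h_{K_3}\|^2+\|h_{A_3^*}\|^2$; (ii) $e_{A_1}=x_g-\pi_{A_1}\tilde x$ and $\|e_{A_1}\|^2_{H_2}=\min_{\zeta\in D(A_1^* )}\big(c_1\|A_1^*\zeta-g\|_{H_1}+\|\zeta-\tilde x\|_{H_2}\big)^2=\max_{\varphi\in D(A_1)}\big(2\langle g,\varphi\rangle_{H_1}-\langle2\tilde x+A_1\varphi,A_1\varphi\rangle_{H_2}\big)$,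 attained at $\hat\zeta:=e_{A_1}+\tilde x\in D(A_1^* )$ (with $A_1^*\hat\zeta=g$) resp. $\hat\varphi:=(\mathcal{A}_1)^{-1}e_{A_1}$; (iii) $e_{A_2^*}=\pi_{A_2^*}x-\pi_{A_2^*}\tilde x$ and $$\|e_{A_2^*}\|^2_{H_2}=\min_{\xi\in D(A_2)}\min_{\zeta\in D(A_2^* )}\big(c_2^2\|A_2^*\zeta-f\|_{H_2}+c_2\|\zeta-A_2\xi\|_{H_3}+\|\xi-\tilde x\|_{H_2}\big)^2=\min_{\xi\in D(A_2^*A_2)}\big(c_2^2\|A_2^*A_2\xi-f\|_{H_2}+\|\xi-\tilde x\|_{H_2}\big)^2$$ $$=\max_{\phi\in D(A_2^*A_2)}\big(2\langle f,\phi\rangle_{H_2}-\langle2\tilde x+A_2^*A_2\phi,A_2^*A_2\phi\rangle_{H_2}\big),$$ where the minima are attained at $\hat\xi:=e_{A_2^*}+\tilde x\in D(A_2^*A_2)$ (with $A_2\hat\xi=y$, $A_2^*A_2\hat\xi=f$) together with $\hat\zeta:=y\in D(A_2^* )$ (with $A_2^*\hat\zeta=f$), and the maximum at $\hat\phi:=(\mathcal{A}_2)^{-1}(\mathcal{A}_2^* )^{-1}e_{A_2^*}$; (iv) $e_{K_2}=k-\pi_2\tilde x$ and $\|e_{K_2}\|^2_{H_2}=\min_{\varphi\in D(A_1)}\min_{\phi\in D(A_2^* )}\|k-\tilde x+A_1\varphi+A_2^*\phi\|^2_{H_2}=\max_{\theta\in K_2}\langle2(k-\tilde x)-\theta,\theta\rangle_{H_2}$,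 attained at $\hat\varphi:=(\mathcal{A}_1)^{-1}\pi_{A_1}\tilde x$, $\hat\phi:=(\mathcal{A}_2^* )^{-1}\pi_{A_2^*}\tilde x$ (with $A_1\hat\varphi+A_2^*\hat\phi=(1-\pi_2)\tilde x$) resp. $\hat\theta:=e_{K_2}$; (v) $h_{A_2}=y-\pi_{A_2}\tilde y$ and $\|h_{A_2}\|^2_{H_3}=\min_{\zeta\in D(A_2^* )}\big(c_2\|A_2^*\zeta-f\|_{H_2}+\|\zeta-\tilde y\|_{H_3}\big)^2=\max_{\varphi\in D(A_2)}\big(2\langle f,\varphi\rangle_{H_2}-\langle2\tilde y+A_2\varphi,A_2\varphi\rangle_{H_3}\big)$, attained at $\hat\zeta:=h_{A_2}+\tilde y\in D(A_2^* )$ (with $A_2^*\hat\zeta=f$) resp. $\hat\varphi:=(\mathcal{A}_2)^{-1}h_{A_2}$; (vi) $h_{A_3^*}=-\pi_{A_3^*}\tilde y$ and $\|h_{A_3^*}\|^2_{H_3}=\min_{\xi\in D(A_3)}\big(c_3\|A_3\xi\|_{H_4}+\|\xi-\tilde y\|_{H_3}\big)^2=\min_{\xi\in N(A_3)}\|\xi-\tilde y\|^2_{H_3}=\max_{\phi\in D(A_3^* )}\big(-\langle2\tilde y+A_3^*\phi,A_3^*\phi\rangle_{H_3}\big)$, attained at $\hat\xi:=h_{A_3^*}+\tilde y\in N(A_3)$ resp. $\hat\phi:=(\mathcal{A}_3^* )^{-1}h_{A_3^*}$; (vii) $h_{K_3}=-\pi_3\tilde y$ and $\|h_{K_3}\|^2_{H_3}=\min_{\varphi\in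 D(A_2)}\min_{\phi\in D(A_3^* )}\|-\tilde y+A_2\varphi+A_3^*\phi\|^2_{H_3}=\max_{\theta\in K_3}\big(-\langle2\tilde y+\theta,\theta\rangle_{H_3}\big)$, attained at $\hat\varphi:=(\mathcal{A}_2)^{-1}\pi_{A_2}\tilde y$, $\hat\phi:=(\mathcal{A}_3^* )^{-1}\pi_{A_3^*}\tilde y$ (with $A_2\hat\varphi+A_3^*\hat\phi=(1-\pi_3)\tilde y$) resp. $\hat\theta:=h_{K_3}$. If $\tilde x=k+\tilde x_\perp$ with $\tilde x_\perp\in K_2^\perp$, then $e_{K_2}=0$ and in (ii), (iii) $\tilde x$ can be replaced by $\tilde x_\perp$. If $\tilde y\in K_3^\perp$, then $h_{K_3}=0$ (and in (v), (vi) $\tilde y$ may be replaced by its $K_3^\perp$ component, i.e. by itself).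
   Context: Let $H_0,\dots,H_4$ be Hilbert spaces and, for $\ell=0,\dots,3$, $A_\ell:D(A_\ell)\subset H_\ell\to H_{\ell+1}$ densely defined closed linear operators with Hilbert space adjoints $A_\ell^*$, satisfying $R(A_\ell)\subset N(A_{\ell+1})$ for $\ell=0,1,2$. Standing assumption: $R(A_1)$, $R(A_2)$ closed and $K_2$ finite dimensional. $K_\ell:=N(A_\ell)\cap N(A_{\ell-1}^* )$, $\pi_\ell:H_\ell\to K_\ell$ orthogonal projectors ($\ell=2,3$); $\pi_{A_1},\pi_{A_2^*}$ orthogonal projectors of $H_2$ onto $R(A_1),R(A_2^* )$; $\pi_{A_2},\pi_{A_3^*}$ orthogonal projectors of $H_3$ onto $R(A_2),R(A_3^* )$. Reduced operators $\mathcal{A}_\ell:=A_\ell|_{D(A_\ell)\cap R(A_\ell^* )}$, $\mathcal{A}_\ell^*:=A_\ell^*|_{D(A_\ell^* )\cap R(A_\ell)}$ (injective). $x_g:=(\mathcal{A}_1^* )^{-1}g$. $c_\ell\in(0,\infty)$ is the best constant with $\|x\|_{H_\ell}\le c_\ell\|A_\ell x\|_{H_{\ell+1}}$ for all $x\in D(\mathcal{A}_\ell)$, $\ell=1,2,3$. $D(A_2^*A_2):=\{\xi\in D(A_2):A_2\xi\in D(A_2^* )\}$ and $D(\mathcal{A}_2^*\mathcal{A}_2)$ analogously. *)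

theory Defs
  imports "HOL-Analysis.Analysis"
begin

text \<open>Real Hilbert spaces are types of sort real_inner + complete_space.
  A (possibly unbounded) operator A : D(A) \<subseteq> H \<rightarrow> H' is a pair (D, A) of
  a domain set D and a function A; values of A outside D are irrelevant.\<close>

definition lin_on :: "'a::real_vector set \<Rightarrow> ('a \<Rightarrow> 'b::real_vector) \<Rightarrow> bool" where
  "lin_on D A \<longleftrightarrow> subspace D \<and>
     (\<forall>x\<in>D. \<forall>y\<in>D. A (x + y) = A x + A y) \<and> (\<forall>c. \<forall>x\<in>D. A (c *\<^sub>R x) = c *\<^sub>R A x)"

definition closed_dd_op :: "'a::real_inner set \<Rightarrow> ('a \<Rightarrow> 'b::real_inner) \<Rightarrow> bool" where
  "closed_dd_op D A \<longleftrightarrow> lin_on D A \<and> closure D = UNIV \<and> closed {(x, A x) | x. x \<in> D}"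

definition adj_dom :: "'a::real_inner set \<Rightarrow> ('a \<Rightarrow> 'b::real_inner) \<Rightarrow> 'b set" where
  "adj_dom D A = {y. \<exists>z. \<forall>x\<in>D. inner (A x) y = inner x z}"

definition adj :: "'a::real_inner set \<Rightarrow> ('a \<Rightarrow> 'b::real_inner) \<Rightarrow> 'b \<Rightarrow> 'a" where
  "adj D A y = (THE z. \<forall>x\<in>D. inner (A x) y = inner x z)"

definition ker_op :: "'a set \<Rightarrow> ('a \<Rightarrow> 'b::zero) \<Rightarrow> 'a set" where
  "ker_op D A = {x \<in> D. A x = 0}"

definition ran_op :: "'a set \<Rightarrow> ('a \<Rightarrow> 'b) \<Rightarrow> 'b set" where
  "ran_op D A = A ` D"

definition oproj :: "'a::real_inner set \<Rightarrow> 'a \<Rightarrow> 'a" where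
  "oproj S x = (THE p. p \<in> S \<and> (\<forall>s\<in>S. inner (x - p) s = 0))"

text \<open>reduced operator \<A> = A restricted to D(A) \<inter> R(A*), and its inverse\<close>
definition red_dom :: "'a::real_inner set \<Rightarrow> ('a \<Rightarrow> 'b::real_inner) \<Rightarrow> 'a set" where
  "red_dom D A = D \<inter> ran_op (adj_dom D A) (adj D A)"

definition red_inv :: "'a::real_inner set \<Rightarrow> ('a \<Rightarrow> 'b::real_inner) \<Rightarrow> 'b \<Rightarrow> 'a" where
  "red_inv D A y = (THE x. x \<in> red_dom D A \<and> A x = y)"

text \<open>reduced adjoint \<A>* = A* restricted to D(A*) \<inter> R(A), and its inverse\<close>
definition red_adj_dom :: "'a::real_inner set \<Rightarrow> ('a \<Rightarrow> 'b::real_inner) \<Rightarrow> 'b set" where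
  "red_adj_dom D A = adj_dom D A \<inter> ran_op D A"

definition red_adj_inv :: "'a::real_inner set \<Rightarrow> ('a \<Rightarrow> 'b::real_inner) \<Rightarrow> 'a \<Rightarrow> 'b" where
  "red_adj_inv D A x = (THE y. y \<in> red_adj_dom D A \<and> adj D A y = x)"

definition best_const :: "'a::real_inner set \<Rightarrow> ('a \<Rightarrow> 'b::real_inner) \<Rightarrow> real" where
  "best_const D A = Inf {c. 0 \<le> c \<and> (\<forall>x \<in> red_dom D A. norm x \<le> c * norm (A x))}"

definition finite_dim_set :: "'a::real_vector set \<Rightarrow> bool" where
  "finite_dim_set S \<longleftrightarrow> (\<exists>B. finite B \<and> S \<subseteq> span B)"

definition stmt_ii :: "'a1::real_inner set \<Rightarrow> ('a1 \<Rightarrow> 'a2::real_inner) \<Rightarrow> 'a1 \<Rightarrow> 'a2 \<Rightarrow> 'a2 \<Rightarrow> bool" where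
  "stmt_ii D1 A1 g xt eA1 \<longleftrightarrow>
    (let c1 = best_const D1 A1;
         F = (\<lambda>\<zeta>. (c1 * norm (adj D1 A1 \<zeta> - g) + norm (\<zeta> - xt))\<^sup>2);
         G = (\<lambda>\<phi>. 2 * inner g \<phi> - inner (2 *\<^sub>R xt + A1 \<phi>) (A1 \<phi>));
         \<zeta>h = eA1 + xt;
         \<phi>h = red_inv D1 A1 eA1
     in eA1 = red_adj_inv D1 A1 g - oproj (ran_op D1 A1) xt
      \<and> \<zeta>h \<in> adj_dom D1 A1 \<and> adj D1 A1 \<zeta>h = g
      \<and> (\<forall>\<zeta>\<in>adj_dom D1 A1. F \<zeta>h \<le> F \<zeta>) \<and> (norm eA1)\<^sup>2 = F \<zeta>h
      \<and> \<phi>h \<in> D1 \<and> (\<forall>\<phi>\<in>D1. G \<phi> \<le> G \<phi>h) \<and> (norm eA1)\<^sup>2 = G \<phi>h)"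

definition stmt_iii :: "'a2::real_inner set \<Rightarrow> ('a2 \<Rightarrow> 'a3::real_inner) \<Rightarrow> 'a2 \<Rightarrow> 'a2 \<Rightarrow> 'a2 \<Rightarrow> 'a2 \<Rightarrow> bool" where
  "stmt_iii D2 A2 f x xt eA2s \<longleftrightarrow>
    (let c2 = best_const D2 A2;
         A2s = adj D2 A2;
         D2s = adj_dom D2 A2;
         DAA = {\<xi> \<in> D2. A2 \<xi> \<in> D2s};
         AA = (\<lambda>\<xi>. A2s (A2 \<xi>));
         F1 = (\<lambda>\<xi> \<zeta>. (c2\<^sup>2 * norm (A2s \<zeta> - f) + c2 * norm (\<zeta> - A2 \<xi>) + norm (\<xi> - xt))\<^sup>2);
         F2 = (\<lambda>\<xi>. (c2\<^sup>2 * norm (AA \<xi> - f) + norm (\<xi> - xt))\<^sup>2);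
         G = (\<lambda>\<phi>. 2 * inner f \<phi> - inner (2 *\<^sub>R xt + AA \<phi>) (AA \<phi>));
         \<xi>h = eA2s + xt;
         \<zeta>h = A2 x;
         \<phi>h = red_inv D2 A2 (red_adj_inv D2 A2 eA2s)
     in eA2s = oproj (ran_op D2s A2s) x - oproj (ran_op D2s A2s) xt
      \<and> \<xi>h \<in> DAA \<and> A2 \<xi>h = A2 x \<and> AA \<xi>h = f
      \<and> \<zeta>h \<in> D2s \<and> A2s \<zeta>h = f
      \<and> (\<forall>\<xi>\<in>D2. \<forall>\<zeta>\<in>D2s. F1 \<xi>h \<zeta>h \<le> F1 \<xi> \<zeta>) \<and> (norm eA2s)\<^sup>2 = F1 \<xi>h \<zeta>h
      \<and> (\<forall>\<xi>\<in>DAA. F2 \<xi>h \<le> F2 \<xi>) \<and> (norm eA2s)\<^sup>2 = F2 \<xi>h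
      \<and> \<phi>h \<in> DAA \<and> (\<forall>\<phi>\<in>DAA. G \<phi> \<le> G \<phi>h) \<and> (norm eA2s)\<^sup>2 = G \<phi>h)"

end

theory Submission
  imports Defs
begin


lemma proj_exists:
  fixes S :: "'a::{real_inner,complete_space} set"
  assumes sub: "subspace S" and cl: "closed S"
  shows "\<exists>p\<in>S. \<forall>s\<in>S. inner (x - p) s = 0"
proof -
  have ne: "S \<noteq> {}" using sub subspace_0 by auto
  define d where "d = Inf ((\<lambda>s. norm (x - s)) ` S)"
  have bdd: "bdd_below ((\<lambda>s. norm (x - s)) ` S)" by (rule bdd_belowI[of _ 0]) auto
  have dle: "d \<le> norm (x - s)" if "s \<in> S" for s
    unfolding d_def using bdd that by (simp add: cInf_lower)
  have d0: "0 \<le> d" unfolding d_def using ne by (intro cInf_greatest) auto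
  have "\<exists>s\<in>S. norm (x - s)^2 < d^2 + 1 / (real n + 1)" for n
  proof -
    have "sqrt (d^2 + 1 / (real n + 1)) > d"
      using d0 by (intro real_less_rsqrt) (simp add: add_pos_pos)
    then obtain s where s: "s \<in> S" "norm (x - s) < sqrt (d^2 + 1 / (real n + 1))"
      using cInf_lessD[of "(\<lambda>s. norm (x - s)) ` S"] ne unfolding d_def by auto
    have "norm (x - s)^2 < (sqrt (d^2 + 1 / (real n + 1)))^2"
      using s(2) by (intro power_strict_mono) auto
    also have "\<dots> = d^2 + 1 / (real n + 1)" by (simp add: add_nonneg_nonneg)
    finally show ?thesis using s by blast
  qed
  then obtain sq where sq: "\<And>n. sq n \<in> S" "\<And>n. norm (x - sq n)^2 < d^2 + 1 / (real n + 1)"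
    by metis
  have par: "norm (sq m - sq n)^2 \<le> 2 / (real m + 1) + 2 / (real n + 1)" for m n
  proof -
    have mid: "(1/2) *\<^sub>R (sq m + sq n) \<in> S"
      using sub sq(1) by (simp add: subspace_add subspace_scale)
    have "d^2 \<le> norm (x - (1/2) *\<^sub>R (sq m + sq n))^2"
      using dle[OF mid] d0 by (simp add: power_mono)
    moreover have "norm (sq m - sq n)^2 = 2 * norm (x - sq m)^2 + 2 * norm (x - sq n)^2 - 4 * norm (x - (1/2) *\<^sub>R (sq m + sq n))^2"
      by (simp add: power2_norm_eq_inner inner_diff_left inner_diff_right inner_add_left inner_add_right inner_commute algebra_simps)
    ultimately show ?thesis using sq(2)[of m] sq(2)[of n] by linarith
  qed
  have "Cauchy sq"
  proof (rule metric_CauchyI)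
    fix e :: real assume e: "e > 0"
    obtain M :: nat where M: "4 / e^2 < real M" using reals_Archimedean2 by blast
    show "\<exists>M. \<forall>m\<ge>M. \<forall>n\<ge>M. dist (sq m) (sq n) < e"
    proof (intro exI allI impI)
      fix m n assume mn: "M \<le> m" "M \<le> n"
      have Mpos: "real M > 0" using M e by (smt (verit) divide_pos_pos zero_less_power)
      have "2 / (real m + 1) \<le> 2 / real M" using mn Mpos by (intro divide_left_mono) auto
      moreover have "2 / (real n + 1) \<le> 2 / real M" using mn Mpos by (intro divide_left_mono) auto
      ultimately have "norm (sq m - sq n)^2 \<le> 4 / real M" using par[of m n] by simp
      also have "\<dots> < e^2" using M e Mpos by (simp add: field_simps)
      finally have "norm (sq m - sq n)^2 < e^2" .
      then have "norm (sq m - sq n) < e" using e by (smt (verit) power_mono norm_ge_zero)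
      then show "dist (sq m) (sq n) < e" by (simp add: dist_norm)
    qed
  qed
  then obtain p where lim: "sq \<longlonglongrightarrow> p" using convergent_eq_Cauchy by blast
  have pS: "p \<in> S" using cl sq(1) lim closed_sequentially by blast
  have pd: "norm (x - p)^2 \<le> d^2"
  proof -
    have l1: "(\<lambda>n. norm (x - sq n)^2) \<longlonglongrightarrow> norm (x - p)^2"
      by (intro tendsto_intros lim)
    have l2: "(\<lambda>n. d^2 + 1 / (real n + 1)) \<longlonglongrightarrow> d^2 + 0"
    proof -
      have z: "(\<lambda>n. 1 / (real n + 1)) \<longlonglongrightarrow> 0"
        using LIMSEQ_inverse_real_of_nat by (simp add: inverse_eq_divide add.commute)
      show ?thesis by (intro tendsto_intros z)
    qed
    show ?thesis using LIMSEQ_le[OF l1 l2] sq(2) less_imp_le by (metis add_0_right)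
  qed
  have "inner (x - p) s = 0" if s: "s \<in> S" for s
  proof (rule ccontr)
    assume nz: "inner (x - p) s \<noteq> 0"
    define a where "a = inner (x - p) s"
    define t where "t = a / (inner s s)"
    have ss: "inner s s > 0" using nz by (metis inner_zero_right inner_gt_zero_iff)
    have mem: "p + t *\<^sub>R s \<in> S" using sub pS s by (simp add: subspace_add subspace_scale)
    have "norm (x - (p + t *\<^sub>R s))^2 = norm (x - p)^2 - 2 * t * a + t * t * inner s s"
      by (simp add: a_def power2_norm_eq_inner inner_diff_left inner_diff_right inner_add_left inner_add_right inner_commute algebra_simps)
    also have "\<dots> = norm (x - p)^2 - a^2 / inner s s"
      using ss by (simp add: t_def field_simps power2_eq_square)
    also have "\<dots> < d^2"
    proof -
      have "a^2 / inner s s > 0" using nz ss by (simp add: a_def)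
      then show ?thesis using pd by linarith
    qed
    finally have "norm (x - (p + t *\<^sub>R s))^2 < d^2" .
    moreover have "d^2 \<le> norm (x - (p + t *\<^sub>R s))^2" using dle[OF mem] d0 by (simp add: power_mono)
    ultimately show False by simp
  qed
  then show ?thesis using pS by blast
qed




lemma oproj_char:
  fixes S :: "'a::{real_inner,complete_space} set"
  assumes "subspace S" "closed S"
  shows "oproj S x \<in> S \<and> (\<forall>s\<in>S. inner (x - oproj S x) s = 0)"
proof -
  obtain p where p: "p \<in> S" "\<forall>s\<in>S. inner (x - p) s = 0" using proj_exists[OF assms] by blast
  have u: "q = p" if q: "q \<in> S" "\<forall>s\<in>S. inner (x - q) s = 0" for q
  proof -
    have d: "q - p \<in> S" using assms(1) p q by (simp add: subspace_diff)
    have "inner (q - p) (q - p) = inner (x - p) (q - p) - inner (x - q) (q - p)"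
      by (simp add: inner_diff_left)
    also have "\<dots> = 0" using d p(2) q(2) by (simp only: ball_simps)
    finally show ?thesis by simp
  qed
  have "oproj S x = p" unfolding oproj_def
  proof (rule the_equality)
    show "p \<in> S \<and> (\<forall>s\<in>S. inner (x - p) s = 0)" using p by blast
    show "\<And>q. q \<in> S \<and> (\<forall>s\<in>S. inner (x - q) s = 0) \<Longrightarrow> q = p" using u by blast
  qed
  then show ?thesis using p by simp
qed

lemma oproj_in: "subspace S \<Longrightarrow> closed S \<Longrightarrow> oproj S (x::'a::{real_inner,complete_space}) \<in> S"
  using oproj_char by blast

lemma oproj_orth: "subspace S \<Longrightarrow> closed S \<Longrightarrow> s \<in> S \<Longrightarrow> inner ((x::'a::{real_inner,complete_space}) - oproj S x) s = 0"
  using oproj_char by blast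

lemma oproj_eq:
  fixes S :: "'a::{real_inner,complete_space} set"
  assumes "subspace S" "closed S" "p \<in> S" "\<And>s. s \<in> S \<Longrightarrow> inner (x - p) s = 0"
  shows "oproj S x = p"
proof -
  have q: "oproj S x \<in> S" "\<forall>s\<in>S. inner (x - oproj S x) s = 0" using oproj_char[OF assms(1,2)] by auto
  have d: "oproj S x - p \<in> S" using assms q by (simp add: subspace_diff)
  have "inner (oproj S x - p) (oproj S x - p) = inner (x - p) (oproj S x - p) - inner (x - oproj S x) (oproj S x - p)"
    by (simp add: inner_diff_left)
  also have "\<dots> = 0" using d q(2) assms(4)[OF d] by (simp only: ball_simps)
  finally show ?thesis by simp
qed

lemma oproj_diff:
  fixes S :: "'a::{real_inner,complete_space} set"
  assumes "subspace S" "closed S"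
  shows "oproj S (x - y) = oproj S x - oproj S y"
proof (rule oproj_eq[OF assms])
  show "oproj S x - oproj S y \<in> S" using assms oproj_in[OF assms] by (simp add: subspace_diff)
  fix s assume s: "s \<in> S"
  have "inner (x - y - (oproj S x - oproj S y)) s = inner (x - oproj S x) s - inner (y - oproj S y) s"
    by (simp add: inner_diff_left)
  then show "inner (x - y - (oproj S x - oproj S y)) s = 0" using oproj_orth[OF assms s] by simp
qed

lemma oproj_add:
  fixes S :: "'a::{real_inner,complete_space} set"
  assumes "subspace S" "closed S"
  shows "oproj S (x + y) = oproj S x + oproj S y"
proof (rule oproj_eq[OF assms])
  show "oproj S x + oproj S y \<in> S" using assms oproj_in[OF assms] by (simp add: subspace_add)
  fix s assume s: "s \<in> S"
  have "inner (x + y - (oproj S x + oproj S y)) s = inner (x - oproj S x) s + inner (y - oproj S y) s"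
    by (simp add: inner_diff_left inner_add_left)
  then show "inner (x + y - (oproj S x + oproj S y)) s = 0" using oproj_orth[OF assms s] by simp
qed

lemma oproj_id:
  fixes S :: "'a::{real_inner,complete_space} set"
  assumes "subspace S" "closed S" "s \<in> S"
  shows "oproj S s = s"
  by (rule oproj_eq[OF assms(1,2,3)]) simp

lemma oproj_zero:
  fixes S :: "'a::{real_inner,complete_space} set"
  assumes "subspace S" "closed S" "\<And>s. s \<in> S \<Longrightarrow> inner k s = 0"
  shows "oproj S k = 0"
proof (rule oproj_eq[OF assms(1,2)])
  show "0 \<in> S" using assms(1) by (rule subspace_0)
  fix s assume "s \<in> S" then show "inner (k - 0) s = 0" using assms(3) by simp
qed

lemma oproj_minus:
  fixes S :: "'a::{real_inner,complete_space} set"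
  assumes "subspace S" "closed S"
  shows "oproj S (- x) = - oproj S x"
  using oproj_diff[OF assms, of 0 x] oproj_zero[OF assms, of 0] by simp

definition ortho :: "'a::real_inner set \<Rightarrow> 'a set" where
  "ortho S = {x. \<forall>s\<in>S. inner s x = 0}"

lemma ortho_subspace: "subspace (ortho S)"
  unfolding ortho_def subspace_def by (simp add: inner_add_right)

lemma ortho_closed: "closed (ortho (S::'a::real_inner set))"
proof -
  have "ortho S = (\<Inter>s\<in>S. {x. inner s x = 0})" unfolding ortho_def by auto
  moreover have "closed {x. inner s x = (0::real)}" for s :: 'a
    by (intro closed_Collect_eq continuous_intros)
  ultimately show ?thesis by auto
qed

lemma ortho_ortho:
  fixes N :: "'a::{real_inner,complete_space} set"
  assumes "subspace N" "closed N" "\<And>y. y \<in> ortho N \<Longrightarrow> inner x y = 0"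
  shows "x \<in> N"
proof -
  have "x - oproj N x \<in> ortho N" unfolding ortho_def
  proof (safe)
    fix s assume "s \<in> N"
    then have "inner (x - oproj N x) s = 0" by (rule oproj_orth[OF assms(1,2)])
    then show "inner s (x - oproj N x) = 0" by (simp only: inner_commute)
  qed
  then have a: "inner x (x - oproj N x) = 0" using assms(3) by blast
  have b: "inner (oproj N x) (x - oproj N x) = 0"
    using oproj_orth[OF assms(1,2) oproj_in[OF assms(1,2)]] by (simp only: inner_commute)
  have "inner (x - oproj N x) (x - oproj N x) = 0" using a b by (simp add: inner_diff_left)
  then have "x = oproj N x" by simp
  then show ?thesis using oproj_in[OF assms(1,2), of x] by metis
qed

lemma inner_split_orth:
  fixes x p :: "'a::real_inner"
  assumes o: "inner (x - p) p = 0"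
  shows "inner x x = inner p p + inner (x - p) (x - p)"
proof -
  have o2: "inner p (x - p) = 0" using o by (simp only: inner_commute)
  have t1: "x = p + (x - p)" by simp
  have "inner (p + (x - p)) (p + (x - p)) = inner p p + inner (x - p) (x - p)"
    unfolding inner_add_left inner_add_right o o2 by simp
  then show ?thesis using t1 by metis
qed

lemma oproj_norm_le:
  fixes S :: "'a::{real_inner,complete_space} set"
  assumes "subspace S" "closed S"
  shows "norm (oproj S x) \<le> norm x"
proof -
  have o: "inner (x - oproj S x) (oproj S x) = 0" using oproj_orth[OF assms oproj_in[OF assms]] .
  have "inner (oproj S x) (oproj S x) \<le> inner x x"
  proof -
    have "0 \<le> inner (x - oproj S x) (x - oproj S x)" by (rule inner_ge_zero)
    then show ?thesis using inner_split_orth[OF o] by linarith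
  qed
  then have "norm (oproj S x) ^2 \<le> norm x ^2" by (metis power2_norm_eq_inner)
  then show ?thesis by (rule power2_le_imp_le) simp
qed




locale cdo =
  fixes D :: "'a::{real_inner,complete_space} set" and A :: "'a \<Rightarrow> 'b::{real_inner,complete_space}"
  assumes op: "closed_dd_op D A"
begin

lemma subD: "subspace D" using op unfolding closed_dd_op_def lin_on_def by blast
lemma Aadd: "x \<in> D \<Longrightarrow> y \<in> D \<Longrightarrow> A (x + y) = A x + A y"
  using op unfolding closed_dd_op_def lin_on_def by blast
lemma Ascale: "x \<in> D \<Longrightarrow> A (c *\<^sub>R x) = c *\<^sub>R A x"
  using op unfolding closed_dd_op_def lin_on_def by blast
lemma dense: "closure D = UNIV" using op unfolding closed_dd_op_def by blast
lemma graph_closed: "closed {(x, A x) | x. x \<in> D}" using op unfolding closed_dd_op_def by blast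

lemma D0: "0 \<in> D" using subD by (rule subspace_0)
lemma Dadd: "x \<in> D \<Longrightarrow> y \<in> D \<Longrightarrow> x + y \<in> D" using subD by (rule subspace_add)
lemma Dscale: "x \<in> D \<Longrightarrow> c *\<^sub>R x \<in> D" using subD by (rule subspace_scale)
lemma Ddiff: "x \<in> D \<Longrightarrow> y \<in> D \<Longrightarrow> x - y \<in> D" using subD by (rule subspace_diff)
lemma Dminus: "x \<in> D \<Longrightarrow> - x \<in> D" using subD by (rule subspace_neg)
lemma A0: "A 0 = 0" using Ascale[OF D0, of 0] by simp
lemma Aminus: "x \<in> D \<Longrightarrow> A (- x) = - A x" using Ascale[of x "-1"] by simp
lemma Adiff: "x \<in> D \<Longrightarrow> y \<in> D \<Longrightarrow> A (x - y) = A x - A y"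
  using Aadd[of x "- y"] Aminus[of y] Dminus[of y] by simp

lemma Asum: "(\<And>k. k < (n::nat) \<Longrightarrow> f k \<in> D) \<Longrightarrow> (\<Sum>k<n. f k) \<in> D \<and> A (\<Sum>k<n. f k) = (\<Sum>k<n. A (f k))"
proof (induction n)
  case 0 then show ?case by (simp add: D0 A0)
next
  case (Suc n)
  have h: "(\<Sum>k<n. f k) \<in> D \<and> A (\<Sum>k<n. f k) = (\<Sum>k<n. A (f k))"
    by (rule Suc.IH) (rule Suc.prems, simp)
  have fn: "f n \<in> D" by (rule Suc.prems) simp
  have "(\<Sum>k<Suc n. f k) = (\<Sum>k<n. f k) + f n" by simp
  moreover have "(\<Sum>k<Suc n. A (f k)) = (\<Sum>k<n. A (f k)) + A (f n)" by simp
  ultimately show ?case using h fn Dadd Aadd by metis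
qed

lemma graph_limit:
  assumes "\<And>n. f n \<in> D" "f \<longlonglongrightarrow> v" "(\<lambda>n. A (f n)) \<longlonglongrightarrow> u"
  shows "v \<in> D \<and> A v = u"
proof -
  have l: "(\<lambda>n. (f n, A (f n))) \<longlonglongrightarrow> (v, u)" using assms(2,3) by (rule tendsto_Pair)
  have m: "(f n, A (f n)) \<in> {(x, A x) | x. x \<in> D}" for n using assms(1) by auto
  have "(v, u) \<in> {(x, A x) | x. x \<in> D}"
    by (rule closed_sequentially[OF graph_closed m l])
  then show ?thesis by auto
qed

lemma dense_zero:
  assumes "\<And>x. x \<in> D \<Longrightarrow> inner x z = 0"
  shows "z = 0"
proof -
  have cl: "closed {x. inner x z = (0::real)}" by (intro closed_Collect_eq continuous_intros)
  have "D \<subseteq> {x. inner x z = 0}" using assms by blast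
  then have "closure D \<subseteq> {x. inner x z = 0}" using cl closure_minimal by blast
  then have "inner z z = 0" using dense by blast
  then show ?thesis by simp
qed

lemma adj_char:
  assumes "\<And>x. x \<in> D \<Longrightarrow> inner (A x) y = inner x z"
  shows "y \<in> adj_dom D A \<and> adj D A y = z"
proof
  show "y \<in> adj_dom D A" unfolding adj_dom_def using assms by blast
  show "adj D A y = z" unfolding adj_def
  proof (rule the_equality)
    show "\<forall>x\<in>D. inner (A x) y = inner x z" using assms by blast
    fix z' assume z': "\<forall>x\<in>D. inner (A x) y = inner x z'"
    have "inner x (z' - z) = 0" if "x \<in> D" for x
      using z' assms that by (simp add: inner_diff_right)
    then have "z' - z = 0" by (rule dense_zero)
    then show "z' = z" by simp
  qed
qed

lemma adj_prop:
  assumes "y \<in> adj_dom D A" "x \<in> D"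
  shows "inner (A x) y = inner x (adj D A y)"
proof -
  obtain z where z: "\<forall>x\<in>D. inner (A x) y = inner x z" using assms(1) unfolding adj_dom_def by blast
  then have "adj D A y = z" using adj_char by blast
  then show ?thesis using z assms(2) by simp
qed

lemma adj_add:
  assumes "y \<in> adj_dom D A" "y' \<in> adj_dom D A"
  shows "y + y' \<in> adj_dom D A \<and> adj D A (y + y') = adj D A y + adj D A y'"
  by (rule adj_char) (simp add: inner_add_right adj_prop assms)

lemma adj_scale:
  assumes "y \<in> adj_dom D A"
  shows "c *\<^sub>R y \<in> adj_dom D A \<and> adj D A (c *\<^sub>R y) = c *\<^sub>R adj D A y"
  by (rule adj_char) (simp add: adj_prop assms)

lemma adj_zero: "0 \<in> adj_dom D A \<and> adj D A 0 = 0"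
  by (rule adj_char) simp

lemma adj_diff:
  assumes "y \<in> adj_dom D A" "y' \<in> adj_dom D A"
  shows "y - y' \<in> adj_dom D A \<and> adj D A (y - y') = adj D A y - adj D A y'"
  by (rule adj_char) (simp add: inner_diff_right adj_prop assms)

lemma adj_dom_subspace: "subspace (adj_dom D A)"
  unfolding subspace_def using adj_zero adj_add adj_scale by blast

lemma ker_adj_iff: "y \<in> ker_op (adj_dom D A) (adj D A) \<longleftrightarrow> (\<forall>x\<in>D. inner (A x) y = 0)"
proof
  assume "y \<in> ker_op (adj_dom D A) (adj D A)"
  then show "\<forall>x\<in>D. inner (A x) y = 0" unfolding ker_op_def using adj_prop by auto
next
  assume "\<forall>x\<in>D. inner (A x) y = 0"
  then have "y \<in> adj_dom D A \<and> adj D A y = 0" by (intro adj_char) simp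
  then show "y \<in> ker_op (adj_dom D A) (adj D A)" unfolding ker_op_def by blast
qed

lemma ker_adj_eq: "ker_op (adj_dom D A) (adj D A) = ortho (ran_op D A)"
  unfolding ortho_def ran_op_def using ker_adj_iff by auto

lemma ker_subspace: "subspace (ker_op D A)"
  unfolding subspace_def ker_op_def using D0 A0 Dadd Aadd Dscale Ascale by auto

lemma ker_closed: "closed (ker_op D A)"
proof -
  have "ker_op D A = fst ` ({(x, A x) | x. x \<in> D} \<inter> (UNIV \<times> {0}))" unfolding ker_op_def by force
  moreover have "closed ({(x, A x) | x. x \<in> D} \<inter> (UNIV \<times> {0}))"
    using graph_closed by (intro closed_Int closed_Times) auto
  moreover have "closed (fst ` ({(x, A x) | x. x \<in> D} \<inter> (UNIV \<times> {0})))"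
  proof -
    have "fst ` ({(x, A x) | x. x \<in> D} \<inter> (UNIV \<times> {0})) = {x. (x, 0) \<in> {(x, A x) | x. x \<in> D}}" by force
    moreover have "closed {x. (x, 0::'b) \<in> {(x, A x) | x. x \<in> D}}"
      using graph_closed by (intro closed_vimage[of _ "\<lambda>x. (x, 0::'b)", unfolded vimage_def]) (auto intro: continuous_intros)
    ultimately show ?thesis by simp
  qed
  ultimately show ?thesis by simp
qed

lemma ran_subspace: "subspace (ran_op D A)"
  unfolding subspace_def ran_op_def
proof (intro conjI ballI allI)
  show "0 \<in> A ` D" using D0 A0 by (metis image_eqI)
  fix x y assume "x \<in> A ` D" "y \<in> A ` D"
  then obtain u v where "u \<in> D" "v \<in> D" "x = A u" "y = A v" by blast
  then show "x + y \<in> A ` D" using Dadd Aadd by (metis image_eqI)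
next
  fix c x assume "x \<in> A ` D"
  then obtain u where "u \<in> D" "x = A u" by blast
  then show "c *\<^sub>R x \<in> A ` D" using Dscale Ascale by (metis image_eqI)
qed

lemma ran_adj_subspace: "subspace (ran_op (adj_dom D A) (adj D A))"
  unfolding subspace_def ran_op_def
proof (intro conjI ballI allI)
  show "0 \<in> adj D A ` adj_dom D A" using adj_zero by (metis image_eqI)
  fix x y assume "x \<in> adj D A ` adj_dom D A" "y \<in> adj D A ` adj_dom D A"
  then obtain u v where "u \<in> adj_dom D A" "v \<in> adj_dom D A" "x = adj D A u" "y = adj D A v" by blast
  then show "x + y \<in> adj D A ` adj_dom D A" using adj_add by (metis image_eqI)
next
  fix c x assume "x \<in> adj D A ` adj_dom D A"
  then obtain u where "u \<in> adj_dom D A" "x = adj D A u" by blast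
  then show "c *\<^sub>R x \<in> adj D A ` adj_dom D A" using adj_scale by (metis image_eqI)
qed

lemma ran_adj_ortho_ker: "ran_op (adj_dom D A) (adj D A) \<subseteq> ortho (ker_op D A)"
  unfolding ortho_def ran_op_def ker_op_def using adj_prop by (fastforce simp: inner_commute)

end




lemma my_summable_norm:
  fixes f :: "nat \<Rightarrow> 'a::{real_normed_vector,complete_space}"
  assumes sn: "summable (\<lambda>n. norm (f n))"
  shows "summable f \<and> norm (suminf f) \<le> (\<Sum>n. norm (f n))"
proof -
  define S where "S N = (\<Sum>k<N. f k)" for N
  define T where "T N = (\<Sum>k<N. norm (f k))" for N
  have CT: "Cauchy T" unfolding T_def using summable_LIMSEQ[OF sn] LIMSEQ_imp_Cauchy by blast
  have key: "dist (S m) (S n) \<le> dist (T m) (T n)" if "n \<le> m" for m n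
  proof -
    have "S m = S n + (\<Sum>k\<in>{n..<m}. f k)" unfolding S_def
      using sum.atLeastLessThan_concat[of 0 n m f] that by (simp add: lessThan_atLeast0)
    moreover have "T m = T n + (\<Sum>k\<in>{n..<m}. norm (f k))" unfolding T_def
      using sum.atLeastLessThan_concat[of 0 n m "\<lambda>k. norm (f k)"] that by (simp add: lessThan_atLeast0)
    ultimately have "dist (S m) (S n) = norm (\<Sum>k\<in>{n..<m}. f k)" "dist (T m) (T n) = \<bar>\<Sum>k\<in>{n..<m}. norm (f k)\<bar>"
      by (simp_all add: dist_norm)
    moreover have "norm (\<Sum>k\<in>{n..<m}. f k) \<le> (\<Sum>k\<in>{n..<m}. norm (f k))" by (rule norm_sum)
    ultimately show ?thesis by simp
  qed
  have key2: "dist (S m) (S n) \<le> dist (T m) (T n)" for m n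
    using key[of n m] key[of m n] by (cases "n \<le> m") (auto simp: dist_commute)
  have "Cauchy S"
  proof (rule metric_CauchyI)
    fix e :: real assume "e > 0"
    then obtain M where M: "\<And>m n. m \<ge> M \<Longrightarrow> n \<ge> M \<Longrightarrow> dist (T m) (T n) < e"
      using metric_CauchyD[OF CT] by blast
    show "\<exists>M. \<forall>m\<ge>M. \<forall>n\<ge>M. dist (S m) (S n) < e"
      using M key2 by (meson le_less_trans)
  qed
  then obtain V where V: "S \<longlonglongrightarrow> V" using convergent_eq_Cauchy by blast
  then have sf: "summable f" unfolding S_def summable_def sums_def by blast
  have "norm (suminf f) \<le> (\<Sum>n. norm (f n))"
  proof (rule LIMSEQ_le)
    show "(\<lambda>N. norm (S N)) \<longlonglongrightarrow> norm (suminf f)"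
      unfolding S_def by (intro tendsto_intros summable_LIMSEQ sf)
    show "T \<longlonglongrightarrow> (\<Sum>n. norm (f n))" unfolding T_def by (rule summable_LIMSEQ[OF sn])
    show "\<exists>N. \<forall>n\<ge>N. norm (S n) \<le> T n" unfolding S_def T_def by (auto intro: norm_sum)
  qed
  then show ?thesis using sf by blast
qed

context cdo begin

lemma baire_step:
  assumes clY: "closed (ran_op D A)"
  shows "\<exists>n u0 r. r > 0 \<and> u0 \<in> ran_op D A \<and>
           (\<forall>u\<in>ran_op D A. dist u u0 < r \<longrightarrow> u \<in> closure {u. \<exists>v\<in>D. A v = u \<and> norm v \<le> real n})"
proof (rule ccontr)
  define Y where "Y = ran_op D A"
  define F where "F n = {u. \<exists>v\<in>D. A v = u \<and> norm v \<le> real n}" for n :: nat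
  assume neg: "\<not> ?thesis"
  have neg': "\<exists>u\<in>Y. dist u u0 < r \<and> u \<notin> closure (F n)" if a: "r > 0" "u0 \<in> Y" for n u0 r
  proof (rule ccontr)
    assume "\<not> (\<exists>u\<in>Y. dist u u0 < r \<and> u \<notin> closure (F n))"
    then have "\<forall>u\<in>ran_op D A. dist u u0 < r \<longrightarrow> u \<in> closure {u. \<exists>v\<in>D. A v = u \<and> norm v \<le> real n}"
      unfolding Y_def F_def by blast
    then show False using neg a(1,2) unfolding Y_def by blast
  qed
  define X where "X = top_of_set Y"
  have cms: "completely_metrizable_space X"
    unfolding X_def
    by (rule completely_metrizable_space_closedin[OF completely_metrizable_space_euclidean])
       (rule iffD1[OF closed_closedin], unfold Y_def, rule clY)
  define G where "G = range (\<lambda>n. Y \<inter> closure (F n))"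
  have "X interior_of \<Union>G = {}"
  proof (rule Baire_category_alt)
    show "completely_metrizable_space X \<or> locally_compact_space X \<and> regular_space X" using cms by blast
    show "countable G" unfolding G_def by simp
    fix T assume "T \<in> G"
    then obtain n where T: "T = Y \<inter> closure (F n)" unfolding G_def by blast
    show "closedin X T \<and> X interior_of T = {}"
    proof
      show "closedin X T" unfolding X_def T by (rule closedin_closed_Int) simp
      show "X interior_of T = {}"
      proof (rule ccontr)
        assume "X interior_of T \<noteq> {}"
        then obtain x where "x \<in> X interior_of T" by blast
        then obtain U where U: "openin X U" "x \<in> U" "U \<subseteq> T" unfolding interior_of_def by blast
        then have "U \<subseteq> Y" "\<forall>x\<in>U. \<exists>e>0. \<forall>x'\<in>Y. dist x' x < e \<longrightarrow> x' \<in> U"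
          unfolding X_def openin_euclidean_subtopology_iff by auto
        then obtain e where e: "e > 0" "\<forall>x'\<in>Y. dist x' x < e \<longrightarrow> x' \<in> U" using U(2) by blast
        have xY: "x \<in> Y" using U(2) \<open>U \<subseteq> Y\<close> by blast
        obtain u where u: "u \<in> Y" "dist u x < e" "u \<notin> closure (F n)" using neg'[OF e(1) xY] by blast
        have "u \<in> U" using e(2) u(1,2) by blast
        then have "u \<in> T" using U(3) by blast
        then show False using u(3) T by blast
      qed
    qed
  qed
  moreover have "\<Union>G = Y"
  proof
    show "\<Union>G \<subseteq> Y" unfolding G_def by blast
    show "Y \<subseteq> \<Union>G"
    proof
      fix u assume "u \<in> Y"
      then obtain v where v: "v \<in> D" "A v = u" unfolding Y_def ran_op_def by blast
      obtain n :: nat where "norm v \<le> real n" using real_arch_simple by blast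
      then have "u \<in> F n" unfolding F_def using v by blast
      then have "u \<in> Y \<inter> closure (F n)" using \<open>u \<in> Y\<close> closure_subset by blast
      then show "u \<in> \<Union>G" unfolding G_def by blast
    qed
  qed
  moreover have "X interior_of Y = Y"
    using interior_of_topspace[of X] unfolding X_def by simp
  moreover have "0 \<in> Y" unfolding Y_def ran_op_def using D0 A0 by (metis image_eqI)
  ultimately show False by simp
qed

lemma approx_step:
  assumes clY: "closed (ran_op D A)"
  shows "\<exists>M\<ge>0. \<forall>u\<in>ran_op D A. \<exists>v\<in>D. norm (u - A v) \<le> norm u / 2 \<and> norm v \<le> M * norm u"
proof -
  define F where "F n = {u. \<exists>v\<in>D. A v = u \<and> norm v \<le> real n}" for n :: nat
  obtain n u0 r where r: "r > 0" "u0 \<in> ran_op D A"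
    and cl: "\<And>u. u \<in> ran_op D A \<Longrightarrow> dist u u0 < r \<Longrightarrow> u \<in> closure (F n)"
    using baire_step[OF clY] unfolding F_def by blast
  have sY: "subspace (ran_op D A)" by (rule ran_subspace)
  have step2: "\<exists>v\<in>D. norm (A v - z) < e \<and> norm v \<le> 2 * real n"
    if z: "z \<in> ran_op D A" "norm z < r" and e: "e > 0" for z e
  proof -
    have "u0 + z \<in> ran_op D A" using sY r(2) z(1) by (rule subspace_add)
    moreover have "dist (u0 + z) u0 < r" using z(2) by (simp add: dist_norm)
    ultimately have c1: "u0 + z \<in> closure (F n)" by (rule cl)
    have c2: "u0 \<in> closure (F n)" using cl[OF r(2)] r(1) by simp
    obtain a where a: "a \<in> F n" "dist a (u0 + z) < e / 2" using c1 e unfolding closure_approachable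
      by (meson half_gt_zero)
    obtain b where b: "b \<in> F n" "dist b u0 < e / 2" using c2 e unfolding closure_approachable
      by (meson half_gt_zero)
    obtain v1 where v1: "v1 \<in> D" "A v1 = a" "norm v1 \<le> real n" using a(1) unfolding F_def by blast
    obtain v2 where v2: "v2 \<in> D" "A v2 = b" "norm v2 \<le> real n" using b(1) unfolding F_def by blast
    have vD: "v1 - v2 \<in> D" using v1(1) v2(1) by (rule Ddiff)
    have "A (v1 - v2) - z = (a - (u0 + z)) - (b - u0)" using Adiff[OF v1(1) v2(1)] v1(2) v2(2) by simp
    then have "norm (A (v1 - v2) - z) \<le> norm (a - (u0 + z)) + norm (b - u0)"
      by (metis norm_triangle_ineq4)
    also have "\<dots> < e" using a(2) b(2) by (simp add: dist_norm)
    finally have n1: "norm (A (v1 - v2) - z) < e" .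
    have "norm (v1 - v2) \<le> norm v1 + norm v2" by (rule norm_triangle_ineq4)
    then have "norm (v1 - v2) \<le> 2 * real n" using v1(3) v2(3) by simp
    then show ?thesis using vD n1 by blast
  qed
  define M where "M = 4 * real n / r"
  have M0: "M \<ge> 0" unfolding M_def using r(1) by simp
  have "\<exists>v\<in>D. norm (u - A v) \<le> norm u / 2 \<and> norm v \<le> M * norm u" if u: "u \<in> ran_op D A" for u
  proof (cases "u = 0")
    case True then show ?thesis using D0 A0 by (intro bexI[of _ 0]) auto
  next
    case False
    then have nu: "norm u > 0" by simp
    define s where "s = r / (2 * norm u)"
    have s0: "s > 0" unfolding s_def using r(1) nu by simp
    have zY: "s *\<^sub>R u \<in> ran_op D A" using sY u by (rule subspace_scale)
    have zn: "norm (s *\<^sub>R u) < r" using s0 nu r(1) by (simp add: s_def)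
    obtain v' where v': "v' \<in> D" "norm (A v' - s *\<^sub>R u) < r / 4" "norm v' \<le> 2 * real n"
      using step2[OF zY zn, of "r / 4"] r(1) by auto
    define v where "v = (1 / s) *\<^sub>R v'"
    have vD: "v \<in> D" unfolding v_def using v'(1) by (rule Dscale)
    have Av: "A v = (1 / s) *\<^sub>R A v'" unfolding v_def using v'(1) by (rule Ascale)
    have "u - A v = - ((1 / s) *\<^sub>R (A v' - s *\<^sub>R u))" using s0 by (simp add: Av algebra_simps)
    then have "norm (u - A v) = (1 / s) * norm (A v' - s *\<^sub>R u)" using s0 by simp
    also have "\<dots> \<le> (1 / s) * (r / 4)" using v'(2) s0 by (intro mult_left_mono) auto
    also have "\<dots> = norm u / 2" unfolding s_def using r(1) nu by (simp add: field_simps)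
    finally have n1: "norm (u - A v) \<le> norm u / 2" .
    have "norm v = (1 / s) * norm v'" unfolding v_def using s0 by simp
    also have "\<dots> \<le> (1 / s) * (2 * real n)" using v'(3) s0 by (intro mult_left_mono) auto
    also have "\<dots> = M * norm u" unfolding s_def M_def using r(1) nu by (simp add: field_simps)
    finally show ?thesis using vD n1 by blast
  qed
  then show ?thesis using M0 by blast
qed

lemma bounded_preimage:
  assumes clY: "closed (ran_op D A)"
  shows "\<exists>C\<ge>0. \<forall>u\<in>ran_op D A. \<exists>v\<in>D. A v = u \<and> norm v \<le> C * norm u"
proof -
  define Y where "Y = ran_op D A"
  obtain M where M0: "M \<ge> 0" and h: "\<forall>u\<in>Y. \<exists>v\<in>D. norm (u - A v) \<le> norm u / 2 \<and> norm v \<le> M * norm u"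
    using approx_step[OF clY] unfolding Y_def by blast
  have h': "\<forall>u\<in>Y. \<exists>v. v \<in> D \<and> norm (u - A v) \<le> norm u / 2 \<and> norm v \<le> M * norm u"
    using h by blast
  obtain phi where phi: "\<forall>u\<in>Y. phi u \<in> D \<and> norm (u - A (phi u)) \<le> norm u / 2 \<and> norm (phi u) \<le> M * norm u"
    using bchoice[OF h'] by blast
  have sY: "subspace Y" unfolding Y_def by (rule ran_subspace)
  have "\<exists>v\<in>D. A v = u \<and> norm v \<le> (2 * M) * norm u" if u: "u \<in> Y" for u
  proof -
    define rr where "rr k = ((\<lambda>w. w - A (phi w)) ^^ k) u" for k
    have rr0: "rr 0 = u" unfolding rr_def by simp
    have rrS: "rr (Suc k) = rr k - A (phi (rr k))" for k unfolding rr_def by simp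
    have rY: "rr k \<in> Y \<and> norm (rr k) \<le> (1/2)^k * norm u" for k
    proof (induction k)
      case 0 then show ?case using u rr0 by simp
    next
      case (Suc k)
      then have a: "rr k \<in> Y" "norm (rr k) \<le> (1/2)^k * norm u" by auto
      have p: "phi (rr k) \<in> D" "norm (rr k - A (phi (rr k))) \<le> norm (rr k) / 2" using phi a(1) by auto
      have "A (phi (rr k)) \<in> Y" unfolding Y_def ran_op_def using p(1) by (rule imageI)
      then have "rr (Suc k) \<in> Y" unfolding rrS using sY a(1) by (simp add: subspace_diff)
      moreover have "norm (rr (Suc k)) \<le> (1/2)^(Suc k) * norm u"
        unfolding rrS using p(2) a(2) by simp
      ultimately show ?case by blast
    qed
    define vv where "vv k = phi (rr k)" for k
    have vvD: "vv k \<in> D" for k unfolding vv_def using phi rY by blast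
    have vvn: "norm (vv k) \<le> M * norm u * (1/2)^k" for k
    proof -
      have "norm (vv k) \<le> M * norm (rr k)" unfolding vv_def using phi rY by blast
      also have "\<dots> \<le> M * ((1/2)^k * norm u)" using rY M0 by (intro mult_left_mono) auto
      finally show ?thesis by (simp add: algebra_simps)
    qed
    have psum: "(\<Sum>k<N. A (vv k)) = u - rr N" for N
    proof (induction N)
      case 0 then show ?case using rr0 by simp
    next
      case (Suc N) then show ?case unfolding vv_def using rrS[of N] by simp
    qed
    have sg: "summable (\<lambda>k. M * norm u * (1/2::real)^k)"
      by (intro summable_mult summable_geometric) simp
    have sn: "summable (\<lambda>k. norm (vv k))"
      by (rule summable_comparison_test[OF _ sg]) (use vvn in auto)
    have sv: "summable vv" using my_summable_norm[OF sn] by blast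
    have l1: "(\<lambda>N. \<Sum>k<N. vv k) \<longlonglongrightarrow> suminf vv" using sv by (rule summable_LIMSEQ)
    have rr_lim: "rr \<longlonglongrightarrow> 0"
    proof (rule Lim_null_comparison)
      show "\<forall>\<^sub>F k in sequentially. norm (rr k) \<le> (1/2)^k * norm u" using rY by simp
      show "(\<lambda>k. (1/2::real)^k * norm u) \<longlonglongrightarrow> 0"
        by (intro tendsto_mult_left_zero LIMSEQ_power_zero) simp
    qed
    have l2: "(\<lambda>N. A (\<Sum>k<N. vv k)) \<longlonglongrightarrow> u"
    proof -
      have e: "A (\<Sum>k<N. vv k) = u - rr N" for N using Asum[of N vv] vvD psum by simp
      have "(\<lambda>N. u - rr N) \<longlonglongrightarrow> u - 0" by (intro tendsto_intros rr_lim)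
      then show ?thesis unfolding e by simp
    qed
    have psD: "(\<Sum>k<N. vv k) \<in> D" for N using Asum[of N vv] vvD by simp
    have g: "suminf vv \<in> D \<and> A (suminf vv) = u" by (rule graph_limit[OF psD l1 l2])
    have "norm (suminf vv) \<le> (\<Sum>k. norm (vv k))" using my_summable_norm[OF sn] by blast
    also have "\<dots> \<le> (\<Sum>k. M * norm u * (1/2::real)^k)"
      by (rule suminf_le[OF _ sn sg]) (use vvn in auto)
    also have "\<dots> = M * norm u * (\<Sum>k. (1/2::real)^k)"
      by (rule suminf_mult) (rule summable_geometric, simp)
    also have "\<dots> = (2 * M) * norm u" by (simp add: suminf_geometric)
    finally show ?thesis using g by blast
  qed
  then show ?thesis unfolding Y_def using M0 by (intro exI[of _ "2 * M"]) auto
qed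

end



lemma riesz:
  fixes L :: "'b::{real_inner,complete_space} \<Rightarrow> real"
  assumes add: "\<And>x y. L (x + y) = L x + L y" and sc: "\<And>c x. L (c *\<^sub>R x) = c * L x"
    and bd: "\<And>x. \<bar>L x\<bar> \<le> B * norm x"
  shows "\<exists>w. \<forall>u. L u = inner u w"
proof (cases "\<forall>u. L u = 0")
  case True then show ?thesis by (intro exI[of _ 0]) simp
next
  case False
  then obtain u0 where u0: "L u0 \<noteq> 0" by blast
  have bl: "bounded_linear L"
  proof (rule bounded_linear_intro[of _ B])
    show "L (x + y) = L x + L y" for x y by (rule add)
    show "L (r *\<^sub>R x) = r *\<^sub>R L x" for r x using sc by simp
    show "norm (L x) \<le> norm x * B" for x using bd[of x] by (simp add: mult.commute)
  qed
  define K where "K = {u. L u = 0}"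
  have L0: "L 0 = 0" using sc[of 0 0] by simp
  have sK: "subspace K" unfolding K_def subspace_def using add sc L0 by simp
  have cK: "closed K" unfolding K_def
    by (intro closed_Collect_eq continuous_on_const linear_continuous_on bl)
  define q where "q = u0 - oproj K u0"
  have Lq: "L q = L u0" unfolding q_def
  proof -
    have "oproj K u0 \<in> K" by (rule oproj_in[OF sK cK])
    then have "L (oproj K u0) = 0" unfolding K_def by simp
    moreover have "L (u0 - oproj K u0) = L u0 + L ((-1) *\<^sub>R oproj K u0)"
    proof -
      have e: "u0 - oproj K u0 = u0 + (-1) *\<^sub>R oproj K u0" by simp
      show ?thesis unfolding e by (rule add)
    qed
    ultimately show "L (u0 - oproj K u0) = L u0" using sc[of "-1" "oproj K u0"] by linarith
  qed
  have qK: "\<And>s. s \<in> K \<Longrightarrow> inner q s = 0" unfolding q_def by (rule oproj_orth[OF sK cK])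
  have qq: "inner q q \<noteq> 0" using Lq u0 L0 by auto
  define w where "w = (L q / inner q q) *\<^sub>R q"
  have "L u = inner u w" for u
  proof -
    have "u - (L u / L q) *\<^sub>R q \<in> K" unfolding K_def
    proof
      have e: "u - (L u / L q) *\<^sub>R q = u + (- (L u / L q)) *\<^sub>R q" by simp
      have "L (u - (L u / L q) *\<^sub>R q) = L u + L ((- (L u / L q)) *\<^sub>R q)" unfolding e by (rule add)
      also have "\<dots> = L u + (- (L u / L q)) * L q" by (simp only: sc)
      also have "\<dots> = 0" using Lq u0 by simp
      finally show "L (u - (L u / L q) *\<^sub>R q) = 0" .
    qed
    then have "inner q (u - (L u / L q) *\<^sub>R q) = 0" by (rule qK)
    then have "inner q u = (L u / L q) * inner q q" by (simp add: inner_diff_right)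
    then show ?thesis unfolding w_def using qq Lq u0 by (simp add: inner_commute field_simps)
  qed
  then show ?thesis by blast
qed

locale cdo_cr = cdo +
  assumes clR: "closed (ran_op D A)"
begin

definition pre :: "'b \<Rightarrow> 'a" where "pre u = (SOME v. v \<in> D \<and> A v = u)"

lemma pre: "u \<in> ran_op D A \<Longrightarrow> pre u \<in> D \<and> A (pre u) = u"
  unfolding pre_def ran_op_def by (rule someI_ex) blast

lemma ran_adj_eq: "ran_op (adj_dom D A) (adj D A) = ortho (ker_op D A)"
proof
  show "ran_op (adj_dom D A) (adj D A) \<subseteq> ortho (ker_op D A)" by (rule ran_adj_ortho_ker)
  show "ortho (ker_op D A) \<subseteq> ran_op (adj_dom D A) (adj D A)"
  proof
    fix z assume z: "z \<in> ortho (ker_op D A)"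
    obtain C where C0: "C \<ge> 0" and C: "\<forall>u\<in>ran_op D A. \<exists>v\<in>D. A v = u \<and> norm v \<le> C * norm u"
      using bounded_preimage[OF clR] by blast
    define Y where "Y = ran_op D A"
    have sY: "subspace Y" "closed Y" unfolding Y_def using ran_subspace clR by auto
    have wd: "inner (pre u) z = inner v z" if "v \<in> D" "A v = u" for u v
    proof -
      have uY: "u \<in> ran_op D A" unfolding ran_op_def using that by blast
      have "pre u - v \<in> ker_op D A" unfolding ker_op_def using pre[OF uY] that Ddiff Adiff by simp
      then have "inner (pre u - v) z = 0" using z unfolding ortho_def by blast
      then show ?thesis by (simp add: inner_diff_left)
    qed
    define L where "L u = inner (pre (oproj Y u)) z" for u
    have pY: "oproj Y u \<in> ran_op D A" for u using oproj_in[OF sY] unfolding Y_def by blast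
    have Ladd: "L (x + y) = L x + L y" for x y
    proof -
      have px: "pre (oproj Y x) \<in> D \<and> A (pre (oproj Y x)) = oproj Y x" by (rule pre[OF pY])
      have py: "pre (oproj Y y) \<in> D \<and> A (pre (oproj Y y)) = oproj Y y" by (rule pre[OF pY])
      have "oproj Y (x + y) = A (pre (oproj Y x) + pre (oproj Y y))"
        using oproj_add[OF sY] px py Aadd by simp
      then have "L (x + y) = inner (pre (oproj Y x) + pre (oproj Y y)) z"
        unfolding L_def using wd px py Dadd by metis
      then show ?thesis unfolding L_def by (simp add: inner_add_left)
    qed
    have Lsc: "L (c *\<^sub>R x) = c * L x" for c x
    proof -
      have px: "pre (oproj Y x) \<in> D \<and> A (pre (oproj Y x)) = oproj Y x" by (rule pre[OF pY])
      have "oproj Y (c *\<^sub>R x) = c *\<^sub>R oproj Y x"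
        by (rule oproj_eq[OF sY]) (auto simp: subspace_scale[OF sY(1)] oproj_in[OF sY] oproj_orth[OF sY]
              simp flip: scaleR_diff_right)
      then have "oproj Y (c *\<^sub>R x) = A (c *\<^sub>R pre (oproj Y x))" using px Ascale by simp
      then have "L (c *\<^sub>R x) = inner (c *\<^sub>R pre (oproj Y x)) z"
        unfolding L_def using wd px Dscale by metis
      then show ?thesis unfolding L_def by simp
    qed
    have Lbd: "\<bar>L x\<bar> \<le> (C * norm z) * norm x" for x
    proof -
      obtain v where v: "v \<in> D" "A v = oproj Y x" "norm v \<le> C * norm (oproj Y x)" using C pY by blast
      have "L x = inner v z" unfolding L_def using wd v by simp
      then have "\<bar>L x\<bar> \<le> norm v * norm z" using Cauchy_Schwarz_ineq2 by simp
      also have "\<dots> \<le> (C * norm (oproj Y x)) * norm z" using v(3) by (intro mult_right_mono) auto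
      also have "\<dots> \<le> (C * norm x) * norm z" using oproj_norm_le[OF sY] C0 by (intro mult_right_mono mult_left_mono) auto
      finally show ?thesis by (simp add: algebra_simps)
    qed
    obtain w where w: "\<forall>u. L u = inner u w" using riesz[OF Ladd Lsc Lbd] by blast
    have "inner (A x) w = inner x z" if x: "x \<in> D" for x
    proof -
      have AY: "A x \<in> Y" unfolding Y_def ran_op_def using x by blast
      have "L (A x) = inner (pre (A x)) z" unfolding L_def using oproj_id[OF sY AY] by simp
      also have "\<dots> = inner x z" using wd x by simp
      finally show ?thesis using w by simp
    qed
    then have "w \<in> adj_dom D A \<and> adj D A w = z" by (rule adj_char)
    then show "z \<in> ran_op (adj_dom D A) (adj D A)" unfolding ran_op_def by (metis image_eqI)
  qed
qed

lemma ran_adj_closed: "closed (ran_op (adj_dom D A) (adj D A))"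
  unfolding ran_adj_eq by (rule ortho_closed)

lemma ker_eq: "x \<in> ker_op D A \<longleftrightarrow> (\<forall>z\<in>ran_op (adj_dom D A) (adj D A). inner x z = 0)"
proof
  assume "x \<in> ker_op D A"
  then show "\<forall>z\<in>ran_op (adj_dom D A) (adj D A). inner x z = 0" unfolding ran_adj_eq ortho_def by blast
next
  assume "\<forall>z\<in>ran_op (adj_dom D A) (adj D A). inner x z = 0"
  then show "x \<in> ker_op D A"
    by (intro ortho_ortho[OF ker_subspace ker_closed]) (simp add: ran_adj_eq)
qed

end



context cdo_cr begin

lemma ortho_ker_sub: "subspace (ortho (ker_op D A))" by (rule ortho_subspace)

lemma red_dom_eq: "red_dom D A = D \<inter> ortho (ker_op D A)"
  unfolding red_dom_def ran_adj_eq ..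

lemma ker_sub_D: "ker_op D A \<subseteq> D" unfolding ker_op_def by blast

lemma red_unique:
  assumes "v \<in> red_dom D A" "v' \<in> red_dom D A" "A v = A v'"
  shows "v = v'"
proof -
  have "v - v' \<in> ker_op D A" unfolding ker_op_def using assms Adiff Ddiff unfolding red_dom_eq by auto
  moreover have "v - v' \<in> ortho (ker_op D A)"
    using assms unfolding red_dom_eq by (auto intro: subspace_diff[OF ortho_ker_sub])
  ultimately have "inner (v - v') (v - v') = 0" unfolding ortho_def by blast
  then show ?thesis by simp
qed

lemma red_exists:
  assumes u: "u \<in> ran_op D A"
  shows "\<exists>v. v \<in> red_dom D A \<and> A v = u"
proof -
  define N where "N = ker_op D A"
  have sN: "subspace N" "closed N" unfolding N_def using ker_subspace ker_closed by auto
  define v0 where "v0 = pre u"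
  have v0: "v0 \<in> D" "A v0 = u" using pre[OF u] unfolding v0_def by auto
  define v where "v = v0 - oproj N v0"
  have pN: "oproj N v0 \<in> N" by (rule oproj_in[OF sN])
  then have pD: "oproj N v0 \<in> D" "A (oproj N v0) = 0" unfolding N_def ker_op_def by auto
  have vD: "v \<in> D" unfolding v_def using v0(1) pD(1) by (rule Ddiff)
  have Av: "A v = u" unfolding v_def using Adiff[OF v0(1) pD(1)] v0(2) pD(2) by simp
  have "v \<in> ortho N" unfolding ortho_def
  proof (intro CollectI ballI)
    fix n assume "n \<in> N"
    then have "inner v n = 0" unfolding v_def by (rule oproj_orth[OF sN])
    then show "inner n v = 0" by (simp only: inner_commute)
  qed
  then show ?thesis using vD Av unfolding red_dom_eq N_def by blast
qed

lemma red_inv: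
  assumes u: "u \<in> ran_op D A"
  shows "red_inv D A u \<in> red_dom D A \<and> A (red_inv D A u) = u"
proof -
  obtain v where v: "v \<in> red_dom D A" "A v = u" using red_exists[OF u] by blast
  have "red_inv D A u = v" unfolding red_inv_def
  proof (rule the_equality)
    show "v \<in> red_dom D A \<and> A v = u" using v by blast
    show "\<And>v'. v' \<in> red_dom D A \<and> A v' = u \<Longrightarrow> v' = v" using red_unique v by metis
  qed
  then show ?thesis using v by simp
qed

lemma red_inv_eq:
  assumes "v \<in> red_dom D A" "A v = u"
  shows "red_inv D A u = v"
proof -
  have "v \<in> D" using assms(1) unfolding red_dom_def by blast
  then have u: "u \<in> ran_op D A" unfolding ran_op_def assms(2)[symmetric] by (rule imageI)
  show ?thesis using red_inv[OF u] assms red_unique by metis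
qed

lemma ranY: "subspace (ran_op D A)" "closed (ran_op D A)" using ran_subspace clR by auto

lemma red_adj_unique:
  assumes "w \<in> red_adj_dom D A" "w' \<in> red_adj_dom D A" "adj D A w = adj D A w'"
  shows "w = w'"
proof -
  have a: "w \<in> adj_dom D A" "w' \<in> adj_dom D A" "w \<in> ran_op D A" "w' \<in> ran_op D A"
    using assms unfolding red_adj_dom_def by auto
  have "w - w' \<in> ker_op (adj_dom D A) (adj D A)" unfolding ker_op_def using adj_diff[OF a(1,2)] assms(3) by simp
  then have "w - w' \<in> ortho (ran_op D A)" unfolding ker_adj_eq .
  moreover have "w - w' \<in> ran_op D A" using a(3,4) by (rule subspace_diff[OF ranY(1)])
  ultimately have "inner (w - w') (w - w') = 0" unfolding ortho_def by blast
  then show ?thesis by simp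
qed

lemma red_adj_exists:
  assumes z: "z \<in> ran_op (adj_dom D A) (adj D A)"
  shows "\<exists>w. w \<in> red_adj_dom D A \<and> adj D A w = z"
proof -
  obtain w0 where w0: "w0 \<in> adj_dom D A" "adj D A w0 = z" using z unfolding ran_op_def by blast
  define w where "w = oproj (ran_op D A) w0"
  have wY: "w \<in> ran_op D A" unfolding w_def by (rule oproj_in[OF ranY])
  have "w0 - w \<in> ortho (ran_op D A)" unfolding ortho_def
  proof (intro CollectI ballI)
    fix s assume "s \<in> ran_op D A"
    then have "inner (w0 - w) s = 0" unfolding w_def by (rule oproj_orth[OF ranY])
    then show "inner s (w0 - w) = 0" by (simp only: inner_commute)
  qed
  then have k: "w0 - w \<in> adj_dom D A" "adj D A (w0 - w) = 0"
    unfolding ker_adj_eq[symmetric] ker_op_def by auto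
  have e: "w = w0 - (w0 - w)" by simp
  have "w \<in> adj_dom D A \<and> adj D A w = z"
    using adj_diff[OF w0(1) k(1)] w0(2) k(2) e by simp
  then show ?thesis using wY unfolding red_adj_dom_def by blast
qed

lemma red_adj_inv:
  assumes z: "z \<in> ran_op (adj_dom D A) (adj D A)"
  shows "red_adj_inv D A z \<in> red_adj_dom D A \<and> adj D A (red_adj_inv D A z) = z"
proof -
  obtain w where w: "w \<in> red_adj_dom D A" "adj D A w = z" using red_adj_exists[OF z] by blast
  have "red_adj_inv D A z = w" unfolding red_adj_inv_def
  proof (rule the_equality)
    show "w \<in> red_adj_dom D A \<and> adj D A w = z" using w by blast
    show "\<And>w'. w' \<in> red_adj_dom D A \<and> adj D A w' = z \<Longrightarrow> w' = w" using red_adj_unique w by metis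
  qed
  then show ?thesis using w by simp
qed

lemma red_adj_inv_eq:
  assumes "w \<in> red_adj_dom D A" "adj D A w = z"
  shows "red_adj_inv D A z = w"
proof -
  have z: "z \<in> ran_op (adj_dom D A) (adj D A)" unfolding ran_op_def red_adj_dom_def using assms
    unfolding red_adj_dom_def by auto
  show ?thesis using red_adj_inv[OF z] assms red_adj_unique by metis
qed

lemma poinc: "0 \<le> best_const D A \<and> (\<forall>x\<in>red_dom D A. norm x \<le> best_const D A * norm (A x))"
proof -
  define S where "S = {c. 0 \<le> c \<and> (\<forall>x \<in> red_dom D A. norm x \<le> c * norm (A x))}"
  obtain C where C0: "C \<ge> 0" and C: "\<forall>u\<in>ran_op D A. \<exists>v\<in>D. A v = u \<and> norm v \<le> C * norm u"
    using bounded_preimage[OF clR] by blast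
  have "C \<in> S" unfolding S_def
  proof (intro CollectI conjI ballI C0)
    fix x assume x: "x \<in> red_dom D A"
    then have xD: "x \<in> D" and xo: "x \<in> ortho (ker_op D A)" unfolding red_dom_eq by auto
    have "A x \<in> ran_op D A" unfolding ran_op_def using xD by blast
    then obtain v where v: "v \<in> D" "A v = A x" "norm v \<le> C * norm (A x)" using C by blast
    have "x - v \<in> ker_op D A" unfolding ker_op_def using Ddiff[OF xD v(1)] Adiff[OF xD v(1)] v(2) by simp
    then have "inner (x - v) x = 0" using xo unfolding ortho_def by blast
    then have "inner x x = inner v x" by (simp add: inner_diff_left)
    also have "\<dots> \<le> norm v * norm x" by (rule norm_cauchy_schwarz)
    finally have "norm x * norm x \<le> norm v * norm x" by (metis power2_norm_eq_inner power2_eq_square)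
    then have "norm x \<le> norm v"
      by (cases "norm x = 0") (auto simp: mult_le_cancel_right)
    then show "norm x \<le> C * norm (A x)" using v(3) by simp
  qed
  then have ne: "S \<noteq> {}" by blast
  have bb: "bdd_below S" unfolding S_def by (rule bdd_belowI[of _ 0]) auto
  have c0: "0 \<le> Inf S" using ne by (rule cInf_greatest) (simp add: S_def)
  have "norm x \<le> Inf S * norm (A x)" if x: "x \<in> red_dom D A" for x
  proof (cases "norm (A x) = 0")
    case True
    then show ?thesis using \<open>C \<in> S\<close> x unfolding S_def by auto
  next
    case False
    then have pos: "norm (A x) > 0" by simp
    have "norm x / norm (A x) \<le> Inf S"
    proof (rule cInf_greatest[OF ne])
      fix c assume "c \<in> S"
      then have "norm x \<le> c * norm (A x)" using x unfolding S_def by blast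
      then show "norm x / norm (A x) \<le> c" using pos by (simp add: divide_le_eq)
    qed
    then show ?thesis using pos by (simp add: divide_le_eq)
  qed
  then show ?thesis using c0 unfolding best_const_def S_def by blast
qed

lemma poinc_adj:
  assumes w: "w \<in> red_adj_dom D A"
  shows "norm w \<le> best_const D A * norm (adj D A w)"
proof -
  have wA: "w \<in> adj_dom D A" "w \<in> ran_op D A" using w unfolding red_adj_dom_def by auto
  obtain v where v: "v \<in> red_dom D A" "A v = w" using red_exists[OF wA(2)] by blast
  have vD: "v \<in> D" using v unfolding red_dom_def by blast
  have "norm w * norm w = inner (A v) w" using v(2) by (metis power2_norm_eq_inner power2_eq_square)
  also have "\<dots> = inner v (adj D A w)" by (rule adj_prop[OF wA(1) vD])
  also have "\<dots> \<le> norm v * norm (adj D A w)" by (rule norm_cauchy_schwarz)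
  also have "\<dots> \<le> (best_const D A * norm w) * norm (adj D A w)"
    using poinc v by (intro mult_right_mono) auto
  finally have "norm w * norm w \<le> norm w * (best_const D A * norm (adj D A w))" by (simp add: algebra_simps)
  then show ?thesis by (cases "norm w = 0") (auto simp: mult_le_cancel_left poinc)
qed

end



lemma quad_id:
  fixes a e :: "'a::real_inner"
  shows "2 * inner a e - inner a a = inner e e - inner (a - e) (a - e)"
  by (simp add: inner_diff_left inner_diff_right inner_commute[of e a])

lemma sq_mono: "0 \<le> (x::real) \<Longrightarrow> x \<le> y \<Longrightarrow> x^2 \<le> y^2"
  by (rule power_mono) auto

lemma norm_diff_ge: "norm (a::'a::real_normed_vector) - norm b \<le> norm (a + b)"
  using norm_triangle_ineq4[of "a + b" b] by simp

context cdo_cr begin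

lemma resid_Y: "u - oproj (ran_op D A) u \<in> adj_dom D A \<and> adj D A (u - oproj (ran_op D A) u) = 0"
proof -
  have "\<forall>x\<in>D. inner (A x) (u - oproj (ran_op D A) u) = 0"
  proof
    fix x assume "x \<in> D"
    then have "A x \<in> ran_op D A" unfolding ran_op_def by blast
    then have "inner (u - oproj (ran_op D A) u) (A x) = 0" by (rule oproj_orth[OF ranY])
    then show "inner (A x) (u - oproj (ran_op D A) u) = 0" by (simp only: inner_commute)
  qed
  then show ?thesis using ker_adj_iff unfolding ker_op_def by blast
qed

lemma adj_proj:
  assumes "w0 \<in> adj_dom D A"
  shows "oproj (ran_op D A) w0 \<in> adj_dom D A \<and> adj D A (oproj (ran_op D A) w0) = adj D A w0"
proof -
  have e: "oproj (ran_op D A) w0 = w0 - (w0 - oproj (ran_op D A) w0)" by simp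
  show ?thesis using adj_diff[OF assms, of "w0 - oproj (ran_op D A) w0"] resid_Y[of w0] e by simp
qed

lemma stmt_ii_gen:
  assumes x0: "x0 \<in> adj_dom D A" "adj D A x0 = g"
  shows "stmt_ii D A g xt (oproj (ran_op D A) (x0 - xt))"
proof -
  define Y where "Y = ran_op D A"
  define P where "P = oproj Y"
  define c where "c = best_const D A"
  define eA where "eA = oproj (ran_op D A) (x0 - xt)"
  have sY: "subspace Y" "closed Y" unfolding Y_def using ranY by auto
  have eA: "eA = P x0 - P xt" unfolding eA_def P_def Y_def by (rule oproj_diff[OF ranY])
  have Px0: "P x0 \<in> adj_dom D A" "adj D A (P x0) = g" "P x0 \<in> Y"
    using adj_proj[OF x0(1)] x0(2) oproj_in[OF sY] unfolding P_def Y_def by auto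
  have xg: "red_adj_inv D A g = P x0"
    by (rule red_adj_inv_eq) (use Px0 in \<open>auto simp: red_adj_dom_def Y_def\<close>)
  have rxt: "xt - P xt \<in> adj_dom D A" "adj D A (xt - P xt) = 0"
    using resid_Y[of xt] unfolding P_def Y_def by auto
  have zh_eq: "eA + xt = P x0 + (xt - P xt)" unfolding eA by simp
  have zh: "eA + xt \<in> adj_dom D A" "adj D A (eA + xt) = g"
    unfolding zh_eq using adj_add[OF Px0(1) rxt(1)] Px0(2) rxt(2) by auto
  have eAY: "eA \<in> Y" unfolding eA_def Y_def by (rule oproj_in[OF ranY])
  have c0: "0 \<le> c" unfolding c_def using poinc by blast
  have Fmin: "norm eA \<le> c * norm (adj D A z - g) + norm (z - xt)" if z: "z \<in> adj_dom D A" for z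
  proof -
    have Pz: "P z \<in> adj_dom D A" "adj D A (P z) = adj D A z" "P z \<in> Y"
      using adj_proj[OF z] oproj_in[OF sY] unfolding P_def Y_def by auto
    have d: "P z - P x0 \<in> red_adj_dom D A" "adj D A (P z - P x0) = adj D A z - g"
      using adj_diff[OF Pz(1) Px0(1)] Pz(2,3) Px0(2,3) subspace_diff[OF sY(1)]
      unfolding red_adj_dom_def Y_def by auto
    have p1: "norm (P z - P x0) \<le> c * norm (adj D A z - g)" using poinc_adj[OF d(1)] d(2) unfolding c_def by simp
    have "P (z - xt) = (P z - P x0) + eA" unfolding eA P_def oproj_diff[OF sY] by simp
    moreover have "norm (P (z - xt)) \<le> norm (z - xt)" unfolding P_def by (rule oproj_norm_le[OF sY])
    ultimately have "norm ((P z - P x0) + eA) \<le> norm (z - xt)" by simp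
    moreover have "norm eA - norm (P z - P x0) \<le> norm ((P z - P x0) + eA)"
      using norm_diff_ge[of eA "P z - P x0"] by (simp add: add.commute)
    ultimately show ?thesis using p1 by linarith
  qed
  define phih where "phih = red_inv D A eA"
  have ph: "phih \<in> red_dom D A" "A phih = eA" using red_inv[of eA] eAY unfolding phih_def Y_def by auto
  have phD: "phih \<in> D" using ph(1) unfolding red_dom_def by blast
  have Geq: "2 * inner g p - inner (2 *\<^sub>R xt + A p) (A p) = inner eA eA - inner (A p - eA) (A p - eA)"
    if p: "p \<in> D" for p
  proof -
    have "inner g p = inner p (adj D A (eA + xt))" using zh(2) by (simp add: inner_commute)
    also have "\<dots> = inner (A p) (eA + xt)" using adj_prop[OF zh(1) p] by simp
    finally have "inner g p = inner (A p) eA + inner (A p) xt" by (simp add: inner_add_right)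
    then have "2 * inner g p - inner (2 *\<^sub>R xt + A p) (A p) = 2 * inner (A p) eA - inner (A p) (A p)"
      by (simp add: inner_add_left inner_commute[of xt "A p"] algebra_simps)
    then show ?thesis using quad_id[of "A p" eA] by simp
  qed
  show ?thesis unfolding stmt_ii_def Let_def eA_def[symmetric] c_def[symmetric]
  proof (intro conjI ballI)
    show "eA = red_adj_inv D A g - oproj (ran_op D A) xt" unfolding xg eA P_def Y_def ..
    show "eA + xt \<in> adj_dom D A" "adj D A (eA + xt) = g" using zh by auto
    show "(c * norm (adj D A (eA + xt) - g) + norm (eA + xt - xt))\<^sup>2 \<le> (c * norm (adj D A z - g) + norm (z - xt))\<^sup>2"
      if z: "z \<in> adj_dom D A" for z
      using Fmin[OF z] zh(2) by (intro sq_mono) auto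
    show "(norm eA)\<^sup>2 = (c * norm (adj D A (eA + xt) - g) + norm (eA + xt - xt))\<^sup>2" using zh(2) by simp
    show "red_inv D A eA \<in> D" using phD unfolding phih_def .
    show "2 * inner g p - inner (2 *\<^sub>R xt + A p) (A p)
          \<le> 2 * inner g (red_inv D A eA) - inner (2 *\<^sub>R xt + A (red_inv D A eA)) (A (red_inv D A eA))"
      if p: "p \<in> D" for p
      using Geq[OF p] Geq[OF phD] ph(2) unfolding phih_def by simp
    show "(norm eA)\<^sup>2 = 2 * inner g (red_inv D A eA) - inner (2 *\<^sub>R xt + A (red_inv D A eA)) (A (red_inv D A eA))"
      using Geq[OF phD] ph(2) unfolding phih_def by (simp add: power2_norm_eq_inner)
  qed
qed

end



context cdo_cr begin

lemma ranS: "subspace (ran_op (adj_dom D A) (adj D A))" "closed (ran_op (adj_dom D A) (adj D A))"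
  using ran_adj_subspace ran_adj_closed by auto

lemma resid_S: "u - oproj (ran_op (adj_dom D A) (adj D A)) u \<in> ker_op D A"
proof -
  have "\<forall>z\<in>ran_op (adj_dom D A) (adj D A). inner (u - oproj (ran_op (adj_dom D A) (adj D A)) u) z = 0"
    using oproj_orth[OF ranS] by blast
  then show ?thesis using ker_eq by blast
qed

lemma projS_D:
  assumes "u \<in> D"
  shows "oproj (ran_op (adj_dom D A) (adj D A)) u \<in> red_dom D A \<and> A (oproj (ran_op (adj_dom D A) (adj D A)) u) = A u"
proof -
  define p where "p = oproj (ran_op (adj_dom D A) (adj D A)) u"
  have k: "u - p \<in> D" "A (u - p) = 0" using resid_S[of u] unfolding p_def ker_op_def by auto
  have e: "p = u - (u - p)" by simp
  have pD: "p \<in> D" using Ddiff[OF assms k(1)] e by simp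
  have "A p = A u" using Adiff[OF assms k(1)] k(2) e by simp
  moreover have "p \<in> ran_op (adj_dom D A) (adj D A)" unfolding p_def by (rule oproj_in[OF ranS])
  ultimately show ?thesis using pD unfolding p_def red_dom_def by blast
qed

lemma stmt_iii_gen:
  assumes x: "x \<in> D" "A x \<in> adj_dom D A" "adj D A (A x) = f"
  shows "stmt_iii D A f x xt (oproj (ran_op (adj_dom D A) (adj D A)) (x - xt))"
proof -
  define S where "S = ran_op (adj_dom D A) (adj D A)"
  define Y where "Y = ran_op D A"
  define c where "c = best_const D A"
  define eS where "eS = oproj (ran_op (adj_dom D A) (adj D A)) (x - xt)"
  have sS: "subspace S" "closed S" unfolding S_def using ranS by auto
  have sY: "subspace Y" "closed Y" unfolding Y_def using ranY by auto
  have eS: "eS = oproj S x - oproj S xt" unfolding eS_def S_def by (rule oproj_diff[OF ranS])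
  have c0: "0 \<le> c" unfolding c_def using poinc by blast
  have Sx: "oproj S x \<in> red_dom D A" "A (oproj S x) = A x" using projS_D[OF x(1)] unfolding S_def by auto
  have Sx': "oproj S x \<in> D" using Sx(1) unfolding red_dom_def by blast
  have rxt: "xt - oproj S xt \<in> D" "A (xt - oproj S xt) = 0" using resid_S[of xt] unfolding S_def ker_op_def by auto
  have xh_eq: "eS + xt = oproj S x + (xt - oproj S xt)" unfolding eS by simp
  have xh: "eS + xt \<in> D" "A (eS + xt) = A x" unfolding xh_eq using Dadd[OF Sx' rxt(1)] Aadd[OF Sx' rxt(1)] Sx(2) rxt(2) by auto
  have eSS: "eS \<in> S" unfolding eS_def S_def by (rule oproj_in[OF ranS])
  have F1min: "norm eS \<le> c^2 * norm (adj D A z - f) + c * norm (z - A xi) + norm (xi - xt)"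
    if xi: "xi \<in> D" and z: "z \<in> adj_dom D A" for xi z
  proof -
    have pxi: "oproj S xi \<in> red_dom D A" "A (oproj S xi) = A xi" using projS_D[OF xi] unfolding S_def by auto
    have pxiD: "oproj S xi \<in> D" using pxi(1) unfolding red_dom_def by blast
    have dd: "oproj S xi - oproj S x \<in> red_dom D A"
      using pxi(1) Sx(1) Ddiff subspace_diff[OF sS(1)] unfolding red_dom_def S_def by auto
    have p1: "norm (oproj S xi - oproj S x) \<le> c * norm (A xi - A x)"
      using poinc dd Adiff[OF pxiD Sx'] pxi(2) Sx(2) unfolding c_def by auto
    have Pz: "oproj Y z \<in> adj_dom D A" "adj D A (oproj Y z) = adj D A z" "oproj Y z \<in> Y"
      using adj_proj[OF z] oproj_in[OF sY] unfolding Y_def by auto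
    have AxY: "A x \<in> Y" "A xi \<in> Y" unfolding Y_def ran_op_def using x(1) xi by auto
    have d2: "oproj Y z - A x \<in> red_adj_dom D A" "adj D A (oproj Y z - A x) = adj D A z - f"
      using adj_diff[OF Pz(1) x(2)] Pz(2,3) x(3) subspace_diff[OF sY(1) Pz(3) AxY(1)]
      unfolding red_adj_dom_def Y_def by auto
    have p2: "norm (oproj Y z - A x) \<le> c * norm (adj D A z - f)" using poinc_adj[OF d2(1)] d2(2) unfolding c_def by simp
    have "A xi - A x = oproj Y (A xi - z) + (oproj Y z - A x)"
      unfolding oproj_diff[OF sY] oproj_id[OF sY AxY(2)] by simp
    then have "norm (A xi - A x) \<le> norm (oproj Y (A xi - z)) + norm (oproj Y z - A x)"
      by (metis norm_triangle_ineq)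
    also have "\<dots> \<le> norm (z - A xi) + c * norm (adj D A z - f)"
      using oproj_norm_le[OF sY, of "A xi - z"] p2 by (simp add: norm_minus_commute)
    finally have p3: "norm (A xi - A x) \<le> norm (z - A xi) + c * norm (adj D A z - f)" .
    have "c * norm (A xi - A x) \<le> c * (norm (z - A xi) + c * norm (adj D A z - f))"
      using p3 c0 by (rule mult_left_mono)
    then have p4: "norm (oproj S xi - oproj S x) \<le> c^2 * norm (adj D A z - f) + c * norm (z - A xi)"
      using p1 by (simp add: power2_eq_square algebra_simps)
    have "oproj S (xi - xt) = (oproj S xi - oproj S x) + eS" unfolding eS oproj_diff[OF sS] by simp
    moreover have "norm (oproj S (xi - xt)) \<le> norm (xi - xt)" by (rule oproj_norm_le[OF sS])
    ultimately have "norm ((oproj S xi - oproj S x) + eS) \<le> norm (xi - xt)" by simp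
    moreover have "norm eS - norm (oproj S xi - oproj S x) \<le> norm ((oproj S xi - oproj S x) + eS)"
      using norm_diff_ge[of eS "oproj S xi - oproj S x"] by (simp add: add.commute)
    ultimately show ?thesis using p4 by linarith
  qed
  have wS: "red_adj_inv D A eS \<in> red_adj_dom D A" "adj D A (red_adj_inv D A eS) = eS"
    using red_adj_inv[of eS] eSS unfolding S_def by auto
  have wY: "red_adj_inv D A eS \<in> ran_op D A" "red_adj_inv D A eS \<in> adj_dom D A"
    using wS(1) unfolding red_adj_dom_def by auto
  define phih where "phih = red_inv D A (red_adj_inv D A eS)"
  have ph: "phih \<in> red_dom D A" "A phih = red_adj_inv D A eS" using red_inv[OF wY(1)] unfolding phih_def by auto
  have phD: "phih \<in> D" using ph(1) unfolding red_dom_def by blast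
  have Geq: "2 * inner f p - inner (2 *\<^sub>R xt + adj D A (A p)) (adj D A (A p))
             = inner eS eS - inner (adj D A (A p) - eS) (adj D A (A p) - eS)"
    if p: "p \<in> D" "A p \<in> adj_dom D A" for p
  proof -
    have "inner f p = inner p (adj D A (A x))" using x(3) by (simp add: inner_commute)
    also have "\<dots> = inner (A p) (A x)" using adj_prop[OF x(2) p(1)] by simp
    also have "\<dots> = inner (A x) (A p)" by (simp only: inner_commute)
    also have "\<dots> = inner x (adj D A (A p))" using adj_prop[OF p(2) x(1)] by simp
    finally have i1: "inner f p = inner x (adj D A (A p))" .
    have aS: "adj D A (A p) \<in> S" unfolding S_def ran_op_def using p(2) by blast
    have "inner (x - xt - eS) (adj D A (A p)) = 0" unfolding eS_def using oproj_orth[OF ranS, of _ "x - xt"] aS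
      unfolding S_def by blast
    then have i2: "inner (x - xt) (adj D A (A p)) = inner eS (adj D A (A p))" by (simp add: inner_diff_left)
    have "2 * inner f p - inner (2 *\<^sub>R xt + adj D A (A p)) (adj D A (A p))
        = 2 * inner (x - xt) (adj D A (A p)) - inner (adj D A (A p)) (adj D A (A p))"
      unfolding i1 by (simp add: inner_add_left inner_diff_left algebra_simps)
    also have "\<dots> = 2 * inner (adj D A (A p)) eS - inner (adj D A (A p)) (adj D A (A p))"
      unfolding i2 by (simp add: inner_commute)
    finally show ?thesis using quad_id[of "adj D A (A p)" eS] by simp
  qed
  have phAA: "A phih \<in> adj_dom D A" "adj D A (A phih) = eS" using ph(2) wY(2) wS(2) by auto
  show ?thesis unfolding stmt_iii_def Let_def eS_def[symmetric] c_def[symmetric]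
  proof (intro conjI ballI)
    show "eS = oproj (ran_op (adj_dom D A) (adj D A)) x - oproj (ran_op (adj_dom D A) (adj D A)) xt"
      using eS unfolding S_def .
    show "eS + xt \<in> {xi \<in> D. A xi \<in> adj_dom D A}" using xh x(2) by simp
    show "A (eS + xt) = A x" by (rule xh(2))
    show "adj D A (A (eS + xt)) = f" using xh(2) x(3) by simp
    show "A x \<in> adj_dom D A" "adj D A (A x) = f" using x by auto
    show "(c\<^sup>2 * norm (adj D A (A x) - f) + c * norm (A x - A (eS + xt)) + norm (eS + xt - xt))\<^sup>2
          \<le> (c\<^sup>2 * norm (adj D A z - f) + c * norm (z - A xi) + norm (xi - xt))\<^sup>2"
      if "xi \<in> D" "z \<in> adj_dom D A" for xi z
      using F1min[OF that] xh(2) x(3) by (intro sq_mono) auto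
    show "(norm eS)\<^sup>2 = (c\<^sup>2 * norm (adj D A (A x) - f) + c * norm (A x - A (eS + xt)) + norm (eS + xt - xt))\<^sup>2"
      using xh(2) x(3) by simp
    show "(c\<^sup>2 * norm (adj D A (A (eS + xt)) - f) + norm (eS + xt - xt))\<^sup>2
          \<le> (c\<^sup>2 * norm (adj D A (A xi) - f) + norm (xi - xt))\<^sup>2"
      if "xi \<in> {xi \<in> D. A xi \<in> adj_dom D A}" for xi
      using F1min[of xi "A xi"] that xh(2) x(3) by (intro sq_mono) auto
    show "(norm eS)\<^sup>2 = (c\<^sup>2 * norm (adj D A (A (eS + xt)) - f) + norm (eS + xt - xt))\<^sup>2"
      using xh(2) x(3) by simp
    show "red_inv D A (red_adj_inv D A eS) \<in> {xi \<in> D. A xi \<in> adj_dom D A}"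
      using phD phAA unfolding phih_def by simp
    show "2 * inner f p - inner (2 *\<^sub>R xt + adj D A (A p)) (adj D A (A p))
          \<le> 2 * inner f (red_inv D A (red_adj_inv D A eS)) -
             inner (2 *\<^sub>R xt + adj D A (A (red_inv D A (red_adj_inv D A eS)))) (adj D A (A (red_inv D A (red_adj_inv D A eS))))"
      if "p \<in> {xi \<in> D. A xi \<in> adj_dom D A}" for p
      using Geq[of p] that Geq[OF phD phAA(1)] phAA(2) unfolding phih_def by simp
    show "(norm eS)\<^sup>2 = 2 * inner f (red_inv D A (red_adj_inv D A eS)) -
             inner (2 *\<^sub>R xt + adj D A (A (red_inv D A (red_adj_inv D A eS)))) (adj D A (A (red_inv D A (red_adj_inv D A eS))))"
      using Geq[OF phD phAA(1)] phAA(2) unfolding phih_def by (simp add: power2_norm_eq_inner)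
  qed
qed

end



context cdo_cr begin

lemma vi_gen:
  assumes y0: "y0 \<in> ker_op D A"
  shows "(let c3 = best_const D A;
           F1 = (\<lambda>\<xi>. (c3 * norm (A \<xi>) + norm (\<xi> - yt))\<^sup>2);
           F2 = (\<lambda>\<xi>. (norm (\<xi> - yt))\<^sup>2);
           G = (\<lambda>\<psi>. - inner (2 *\<^sub>R yt + adj D A \<psi>) (adj D A \<psi>));
           \<xi>h = oproj (ran_op (adj_dom D A) (adj D A)) (y0 - yt) + yt;
           \<psi>h = red_adj_inv D A (oproj (ran_op (adj_dom D A) (adj D A)) (y0 - yt))
       in oproj (ran_op (adj_dom D A) (adj D A)) (y0 - yt) = - oproj (ran_op (adj_dom D A) (adj D A)) yt
        \<and> \<xi>h \<in> ker_op D A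
        \<and> (\<forall>\<xi>\<in>D. F1 \<xi>h \<le> F1 \<xi>) \<and> (norm (oproj (ran_op (adj_dom D A) (adj D A)) (y0 - yt)))\<^sup>2 = F1 \<xi>h
        \<and> (\<forall>\<xi>\<in>ker_op D A. F2 \<xi>h \<le> F2 \<xi>) \<and> (norm (oproj (ran_op (adj_dom D A) (adj D A)) (y0 - yt)))\<^sup>2 = F2 \<xi>h
        \<and> \<psi>h \<in> adj_dom D A \<and> (\<forall>\<psi>\<in>adj_dom D A. G \<psi> \<le> G \<psi>h)
        \<and> (norm (oproj (ran_op (adj_dom D A) (adj D A)) (y0 - yt)))\<^sup>2 = G \<psi>h)"
proof -
  define S where "S = ran_op (adj_dom D A) (adj D A)"
  define c where "c = best_const D A"
  define hS where "hS = oproj (ran_op (adj_dom D A) (adj D A)) (y0 - yt)"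
  have sS: "subspace S" "closed S" unfolding S_def using ranS by auto
  have c0: "0 \<le> c" unfolding c_def using poinc by blast
  have Sy0: "oproj S y0 = 0"
    by (rule oproj_zero[OF sS]) (use y0 ker_eq in \<open>auto simp: S_def\<close>)
  have hS: "hS = - oproj S yt" unfolding hS_def S_def[symmetric] oproj_diff[OF sS] Sy0 by simp
  have hSS: "hS \<in> S" unfolding hS_def S_def by (rule oproj_in[OF ranS])
  have xhe: "hS + yt = yt - oproj S yt" unfolding hS by simp
  have xhK: "hS + yt \<in> ker_op D A" unfolding xhe S_def by (rule resid_S)
  have xhD: "hS + yt \<in> D" "A (hS + yt) = 0" using xhK unfolding ker_op_def by auto
  have F1min: "norm hS \<le> c * norm (A xi) + norm (xi - yt)" if xi: "xi \<in> D" for xi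
  proof -
    have pxi: "oproj S xi \<in> red_dom D A" "A (oproj S xi) = A xi" using projS_D[OF xi] unfolding S_def by auto
    have p1: "norm (oproj S xi) \<le> c * norm (A xi)" using poinc pxi unfolding c_def by auto
    have "oproj S (xi - yt) = oproj S xi + hS" unfolding hS oproj_diff[OF sS] by simp
    moreover have "norm (oproj S (xi - yt)) \<le> norm (xi - yt)" by (rule oproj_norm_le[OF sS])
    ultimately have "norm (oproj S xi + hS) \<le> norm (xi - yt)" by simp
    moreover have "norm hS - norm (oproj S xi) \<le> norm (oproj S xi + hS)"
      using norm_diff_ge[of hS "oproj S xi"] by (simp add: add.commute)
    ultimately show ?thesis using p1 by linarith
  qed
  have F2min: "norm hS \<le> norm (xi - yt)" if xi: "xi \<in> ker_op D A" for xi
  proof -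
    have xiD: "xi \<in> D" "A xi = 0" using xi unfolding ker_op_def by auto
    show ?thesis using F1min[OF xiD(1)] xiD(2) by simp
  qed
  have wS: "red_adj_inv D A hS \<in> red_adj_dom D A" "adj D A (red_adj_inv D A hS) = hS"
    using red_adj_inv[of hS] hSS unfolding S_def by auto
  have wD: "red_adj_inv D A hS \<in> adj_dom D A" using wS(1) unfolding red_adj_dom_def by auto
  have Geq: "- inner (2 *\<^sub>R yt + adj D A p) (adj D A p) = inner hS hS - inner (adj D A p - hS) (adj D A p - hS)"
    if p: "p \<in> adj_dom D A" for p
  proof -
    have aS: "adj D A p \<in> S" unfolding S_def ran_op_def using p by blast
    have "inner (yt - oproj S yt) (adj D A p) = 0" using oproj_orth[OF sS aS] .
    then have "inner yt (adj D A p) = - inner hS (adj D A p)" unfolding hS by (simp add: inner_diff_left)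
    then have "- inner (2 *\<^sub>R yt + adj D A p) (adj D A p) = 2 * inner (adj D A p) hS - inner (adj D A p) (adj D A p)"
      by (simp add: inner_add_left inner_commute[of hS])
    then show ?thesis using quad_id[of "adj D A p" hS] by simp
  qed
  show ?thesis unfolding Let_def hS_def[symmetric] c_def[symmetric]
  proof (intro conjI ballI)
    show "hS = - oproj (ran_op (adj_dom D A) (adj D A)) yt" using hS unfolding S_def .
    show "hS + yt \<in> ker_op D A" by (rule xhK)
    show "(c * norm (A (hS + yt)) + norm (hS + yt - yt))\<^sup>2 \<le> (c * norm (A xi) + norm (xi - yt))\<^sup>2"
      if "xi \<in> D" for xi using F1min[OF that] xhD(2) by (intro sq_mono) auto
    show "(norm hS)\<^sup>2 = (c * norm (A (hS + yt)) + norm (hS + yt - yt))\<^sup>2" using xhD(2) by simp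
    show "(norm (hS + yt - yt))\<^sup>2 \<le> (norm (xi - yt))\<^sup>2" if "xi \<in> ker_op D A" for xi
      using F2min[OF that] by (intro sq_mono) auto
    show "(norm hS)\<^sup>2 = (norm (hS + yt - yt))\<^sup>2" by simp
    show "red_adj_inv D A hS \<in> adj_dom D A" by (rule wD)
    show "- inner (2 *\<^sub>R yt + adj D A p) (adj D A p)
          \<le> - inner (2 *\<^sub>R yt + adj D A (red_adj_inv D A hS)) (adj D A (red_adj_inv D A hS))"
      if "p \<in> adj_dom D A" for p using Geq[OF that] Geq[OF wD] wS(2) by simp
    show "(norm hS)\<^sup>2 = - inner (2 *\<^sub>R yt + adj D A (red_adj_inv D A hS)) (adj D A (red_adj_inv D A hS))"
      using Geq[OF wD] wS(2) by (simp add: power2_norm_eq_inner)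
  qed
qed

end



locale cplx = A: cdo_cr DA A + B: cdo_cr DB B
  for DA :: "'a::{real_inner,complete_space} set" and A :: "'a \<Rightarrow> 'b::{real_inner,complete_space}"
  and DB :: "'b set" and B :: "'b \<Rightarrow> 'c::{real_inner,complete_space}" +
  assumes cx: "ran_op DA A \<subseteq> ker_op DB B"
begin

lemma sK: "subspace (ker_op DB B \<inter> ker_op (adj_dom DA A) (adj DA A))" "closed (ker_op DB B \<inter> ker_op (adj_dom DA A) (adj DA A))"
proof -
  have e: "ker_op (adj_dom DA A) (adj DA A) = ortho (ran_op DA A)" by (rule A.ker_adj_eq)
  show "subspace (ker_op DB B \<inter> ker_op (adj_dom DA A) (adj DA A))" unfolding e
    by (intro subspace_inter B.ker_subspace ortho_subspace)
  show "closed (ker_op DB B \<inter> ker_op (adj_dom DA A) (adj DA A))" unfolding e by (intro closed_Int B.ker_closed ortho_closed)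
qed

lemma orth12: "s1 \<in> ran_op DA A \<Longrightarrow> s2 \<in> ran_op (adj_dom DB B) (adj DB B) \<Longrightarrow> inner s1 s2 = 0"
proof -
  assume s1: "s1 \<in> ran_op DA A" and s2: "s2 \<in> ran_op (adj_dom DB B) (adj DB B)"
  then have "s1 \<in> ker_op DB B" using cx by blast
  then show "inner s1 s2 = 0" using B.ker_eq s2 by blast
qed

lemma orthK1: "k \<in> (ker_op DB B \<inter> ker_op (adj_dom DA A) (adj DA A)) \<Longrightarrow> s \<in> ran_op DA A \<Longrightarrow> inner k s = 0"
  using A.ker_adj_eq unfolding ortho_def by (auto simp: inner_commute)

lemma orthK2: "k \<in> (ker_op DB B \<inter> ker_op (adj_dom DA A) (adj DA A)) \<Longrightarrow> s \<in> ran_op (adj_dom DB B) (adj DB B) \<Longrightarrow> inner k s = 0"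
  using B.ker_eq by blast

lemma decomp:
  shows "e = oproj (ran_op DA A) e + oproj (ker_op DB B \<inter> ker_op (adj_dom DA A) (adj DA A)) e + oproj (ran_op (adj_dom DB B) (adj DB B)) e
    \<and> oproj (ran_op DA A) e \<in> ran_op DA A \<and> oproj (ker_op DB B \<inter> ker_op (adj_dom DA A) (adj DA A)) e \<in> (ker_op DB B \<inter> ker_op (adj_dom DA A) (adj DA A))
    \<and> oproj (ran_op (adj_dom DB B) (adj DB B)) e \<in> ran_op (adj_dom DB B) (adj DB B)
    \<and> inner (oproj (ran_op DA A) e) (oproj (ker_op DB B \<inter> ker_op (adj_dom DA A) (adj DA A)) e) = 0
    \<and> inner (oproj (ran_op DA A) e) (oproj (ran_op (adj_dom DB B) (adj DB B)) e) = 0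
    \<and> inner (oproj (ker_op DB B \<inter> ker_op (adj_dom DA A) (adj DA A)) e) (oproj (ran_op (adj_dom DB B) (adj DB B)) e) = 0
    \<and> (norm e)\<^sup>2 = (norm (oproj (ran_op DA A) e))\<^sup>2 + (norm (oproj (ker_op DB B \<inter> ker_op (adj_dom DA A) (adj DA A)) e))\<^sup>2 + (norm (oproj (ran_op (adj_dom DB B) (adj DB B)) e))\<^sup>2"
proof -
  define R1 where "R1 = ran_op DA A"
  define R2 where "R2 = ran_op (adj_dom DB B) (adj DB B)"
  define K where "K = (ker_op DB B \<inter> ker_op (adj_dom DA A) (adj DA A))"
  have s1: "subspace R1" "closed R1" unfolding R1_def using A.ranY by auto
  have s2: "subspace R2" "closed R2" unfolding R2_def using B.ranS by auto
  have sk: "subspace K" "closed K" unfolding K_def using sK by auto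
  define e1 where "e1 = oproj R1 e"
  define e2 where "e2 = oproj R2 e"
  have e1R: "e1 \<in> R1" unfolding e1_def by (rule oproj_in[OF s1])
  have e2R: "e2 \<in> R2" unfolding e2_def by (rule oproj_in[OF s2])
  define r where "r = e - e1 - e2"
  have r1: "inner r s = 0" if s: "s \<in> R1" for s
  proof -
    have a: "inner (e - e1) s = 0" unfolding e1_def by (rule oproj_orth[OF s1 s])
    have b: "inner s e2 = 0" using orth12 s e2R unfolding R1_def R2_def by blast
    have "inner r s = inner (e - e1) s - inner e2 s" unfolding r_def by (simp add: inner_diff_left)
    then show ?thesis using a b by (simp add: inner_commute)
  qed
  have r2: "inner r s = 0" if s: "s \<in> R2" for s
  proof -
    have a: "inner (e - e2) s = 0" unfolding e2_def by (rule oproj_orth[OF s2 s])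
    have b: "inner e1 s = 0" using orth12 s e1R unfolding R1_def R2_def by blast
    have "inner r s = inner (e - e2) s - inner e1 s" unfolding r_def by (simp add: inner_diff_left)
    then show ?thesis using a b by simp
  qed
  have rA: "r \<in> ker_op (adj_dom DA A) (adj DA A)"
    unfolding A.ker_adj_eq ortho_def using r1 unfolding R1_def by (auto simp: inner_commute)
  have rB: "r \<in> ker_op DB B" using B.ker_eq r2 unfolding R2_def by blast
  have rK: "r \<in> K" unfolding K_def using rA rB by blast
  have ek: "oproj K e = r"
  proof (rule oproj_eq[OF sk rK])
    fix k assume k: "k \<in> K"
    have "e - r = e1 + e2" unfolding r_def by simp
    moreover have "inner e1 k = 0" using orthK1[of k e1] k e1R unfolding K_def R1_def by (simp add: inner_commute)
    moreover have "inner e2 k = 0" using orthK2[of k e2] k e2R unfolding K_def R2_def by (simp add: inner_commute)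
    ultimately show "inner (e - r) k = 0" by (simp add: inner_add_left)
  qed
  have o1: "inner e1 r = 0" using orthK1[of r e1] rK e1R unfolding K_def R1_def by (simp add: inner_commute)
  have o2: "inner e1 e2 = 0" using orth12 e1R e2R unfolding R1_def R2_def by blast
  have o3: "inner r e2 = 0" using orthK2[of r e2] rK e2R unfolding K_def R2_def by simp
  have ee: "e = e1 + r + e2" unfolding r_def by simp
  have "inner e e = inner e1 e1 + inner r r + inner e2 e2"
    unfolding ee using o1 o2 o3 by (simp add: inner_add_left inner_add_right inner_commute)
  then have nn: "(norm e)\<^sup>2 = (norm e1)\<^sup>2 + (norm r)\<^sup>2 + (norm e2)\<^sup>2" by (simp add: power2_norm_eq_inner)
  show ?thesis unfolding R1_def[symmetric] R2_def[symmetric] K_def[symmetric] ek e1_def[symmetric] e2_def[symmetric]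
    using ee e1R e2R rK o1 o2 o3 nn by blast
qed

lemma iv_gen:
  assumes k: "k \<in> (ker_op DB B \<inter> ker_op (adj_dom DA A) (adj DA A))" and x0: "oproj (ker_op DB B \<inter> ker_op (adj_dom DA A) (adj DA A)) x0 = k"
  shows "(let \<phi>h = red_inv DA A (oproj (ran_op DA A) xt);
           \<psi>h = red_adj_inv DB B (oproj (ran_op (adj_dom DB B) (adj DB B)) xt);
           F = (\<lambda>\<phi> \<psi>. (norm (k - xt + A \<phi> + adj DB B \<psi>))\<^sup>2);
           G = (\<lambda>\<theta>. inner (2 *\<^sub>R (k - xt) - \<theta>) \<theta>)
       in (oproj (ker_op DB B \<inter> ker_op (adj_dom DA A) (adj DA A)) (x0 - xt)) = k - oproj (ker_op DB B \<inter> ker_op (adj_dom DA A) (adj DA A)) xt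
        \<and> \<phi>h \<in> DA \<and> \<psi>h \<in> adj_dom DB B \<and> A \<phi>h + adj DB B \<psi>h = xt - oproj (ker_op DB B \<inter> ker_op (adj_dom DA A) (adj DA A)) xt
        \<and> (\<forall>\<phi>\<in>DA. \<forall>\<psi>\<in>adj_dom DB B. F \<phi>h \<psi>h \<le> F \<phi> \<psi>) \<and> (norm (oproj (ker_op DB B \<inter> ker_op (adj_dom DA A) (adj DA A)) (x0 - xt)))\<^sup>2 = F \<phi>h \<psi>h
        \<and> (oproj (ker_op DB B \<inter> ker_op (adj_dom DA A) (adj DA A)) (x0 - xt)) \<in> (ker_op DB B \<inter> ker_op (adj_dom DA A) (adj DA A)) \<and> (\<forall>\<theta>\<in>(ker_op DB B \<inter> ker_op (adj_dom DA A) (adj DA A)). G \<theta> \<le> G (oproj (ker_op DB B \<inter> ker_op (adj_dom DA A) (adj DA A)) (x0 - xt))) \<and> (norm (oproj (ker_op DB B \<inter> ker_op (adj_dom DA A) (adj DA A)) (x0 - xt)))\<^sup>2 = G (oproj (ker_op DB B \<inter> ker_op (adj_dom DA A) (adj DA A)) (x0 - xt)))"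
proof -
  define R1 where "R1 = ran_op DA A"
  define R2 where "R2 = ran_op (adj_dom DB B) (adj DB B)"
  define K where "K = (ker_op DB B \<inter> ker_op (adj_dom DA A) (adj DA A))"
  have s1: "subspace R1" "closed R1" unfolding R1_def using A.ranY by auto
  have s2: "subspace R2" "closed R2" unfolding R2_def using B.ranS by auto
  have sk: "subspace K" "closed K" unfolding K_def using sK by auto
  define eK where "eK = oproj K (x0 - xt)"
  have eK: "eK = k - oproj K xt" unfolding eK_def oproj_diff[OF sk] x0[folded K_def] ..
  have eKK: "eK \<in> K" unfolding eK_def by (rule oproj_in[OF sk])
  have kK: "k \<in> K" using k unfolding K_def .
  define phih where "phih = red_inv DA A (oproj R1 xt)"
  define psih where "psih = red_adj_inv DB B (oproj R2 xt)"
  have ph: "phih \<in> red_dom DA A" "A phih = oproj R1 xt"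
    using A.red_inv[of "oproj R1 xt"] oproj_in[OF s1] unfolding phih_def R1_def by auto
  have phD: "phih \<in> DA" using ph(1) unfolding red_dom_def by blast
  have ps: "psih \<in> red_adj_dom DB B" "adj DB B psih = oproj R2 xt"
    using B.red_adj_inv[of "oproj R2 xt"] oproj_in[OF s2] unfolding psih_def R2_def by auto
  have psD: "psih \<in> adj_dom DB B" using ps(1) unfolding red_adj_dom_def by blast
  have dxt: "xt = oproj R1 xt + oproj K xt + oproj R2 xt"
    using decomp[of xt] unfolding R1_def R2_def K_def by blast
  have sum: "A phih + adj DB B psih = xt - oproj K xt"
  proof -
    define a where "a = oproj R1 xt"
    define b where "b = oproj K xt"
    define c where "c = oproj R2 xt"
    have "xt = a + b + c" unfolding a_def b_def c_def by (rule dxt)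
    then have "xt - b = a + c" by (simp add: algebra_simps)
    then show ?thesis unfolding ph(2) ps(2) a_def b_def c_def by simp
  qed
  have Fmin: "norm eK \<le> norm (k - xt + A p + adj DB B q)" if p: "p \<in> DA" and q: "q \<in> adj_dom DB B" for p q
  proof -
    have a1: "oproj K (A p) = 0"
    proof (rule oproj_zero[OF sk])
      fix s assume s: "s \<in> K"
      have "A p \<in> ran_op DA A" unfolding ran_op_def using p by (rule imageI)
      then have "inner s (A p) = 0" using orthK1 s unfolding K_def by blast
      then show "inner (A p) s = 0" by (simp only: inner_commute)
    qed
    have a2: "oproj K (adj DB B q) = 0"
    proof (rule oproj_zero[OF sk])
      fix s assume s: "s \<in> K"
      have "adj DB B q \<in> ran_op (adj_dom DB B) (adj DB B)" unfolding ran_op_def using q by (rule imageI)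
      then have "inner s (adj DB B q) = 0" using orthK2 s unfolding K_def by blast
      then show "inner (adj DB B q) s = 0" by (simp only: inner_commute)
    qed
    have "oproj K (k - xt + A p + adj DB B q) = eK"
      unfolding oproj_add[OF sk] oproj_diff[OF sk] a1 a2 oproj_id[OF sk kK] eK by simp
    then show ?thesis using oproj_norm_le[OF sk, of "k - xt + A p + adj DB B q"] by simp
  qed
  have Fh: "k - xt + A phih + adj DB B psih = eK" unfolding add.assoc sum eK by simp
  have Geq: "inner (2 *\<^sub>R (k - xt) - t) t = inner eK eK - inner (t - eK) (t - eK)" if t: "t \<in> K" for t
  proof -
    have pe: "oproj K (k - xt) = eK" unfolding oproj_diff[OF sk] oproj_id[OF sk kK] eK ..
    have "inner ((k - xt) - eK) t = 0" using oproj_orth[OF sk t, of "k - xt"] unfolding pe .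
    then have "inner (k - xt) t = inner eK t" by (simp add: inner_diff_left)
    then have "inner (k - xt) t = inner t eK" by (simp only: inner_commute)
    then have "inner (2 *\<^sub>R (k - xt) - t) t = 2 * inner t eK - inner t t" by (simp add: inner_diff_left)
    then show ?thesis using quad_id[of t eK] by simp
  qed
  show ?thesis unfolding Let_def R1_def[symmetric] R2_def[symmetric] K_def[symmetric] eK_def[symmetric]
    phih_def[symmetric] psih_def[symmetric]
  proof (intro conjI ballI)
    show "eK = k - oproj K xt" by (rule eK)
    show "phih \<in> DA" "psih \<in> adj_dom DB B" using phD psD by auto
    show "A phih + adj DB B psih = xt - oproj K xt" by (rule sum)
    show "(norm (k - xt + A phih + adj DB B psih))\<^sup>2 \<le> (norm (k - xt + A p + adj DB B q))\<^sup>2"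
      if "p \<in> DA" "q \<in> adj_dom DB B" for p q using Fmin[OF that] Fh by (intro sq_mono) auto
    show "(norm eK)\<^sup>2 = (norm (k - xt + A phih + adj DB B psih))\<^sup>2" using Fh by simp
    show "eK \<in> K" by (rule eKK)
    show "inner (2 *\<^sub>R (k - xt) - t) t \<le> inner (2 *\<^sub>R (k - xt) - eK) eK" if "t \<in> K" for t
      using Geq[OF that] Geq[OF eKK] by simp
    show "(norm eK)\<^sup>2 = inner (2 *\<^sub>R (k - xt) - eK) eK" using Geq[OF eKK] by (simp add: power2_norm_eq_inner)
  qed
qed

lemma vii_gen:
  assumes y0: "y0 \<in> ran_op DA A"
  shows "(let \<phi>h = red_inv DA A (oproj (ran_op DA A) yt);
           \<psi>h = red_adj_inv DB B (oproj (ran_op (adj_dom DB B) (adj DB B)) yt);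
           F = (\<lambda>\<phi> \<psi>. (norm (- yt + A \<phi> + adj DB B \<psi>))\<^sup>2);
           G = (\<lambda>\<theta>. - inner (2 *\<^sub>R yt + \<theta>) \<theta>)
       in (oproj (ker_op DB B \<inter> ker_op (adj_dom DA A) (adj DA A)) (y0 - yt)) = - oproj (ker_op DB B \<inter> ker_op (adj_dom DA A) (adj DA A)) yt
        \<and> \<phi>h \<in> DA \<and> \<psi>h \<in> adj_dom DB B \<and> A \<phi>h + adj DB B \<psi>h = yt - oproj (ker_op DB B \<inter> ker_op (adj_dom DA A) (adj DA A)) yt
        \<and> (\<forall>\<phi>\<in>DA. \<forall>\<psi>\<in>adj_dom DB B. F \<phi>h \<psi>h \<le> F \<phi> \<psi>) \<and> (norm (oproj (ker_op DB B \<inter> ker_op (adj_dom DA A) (adj DA A)) (y0 - yt)))\<^sup>2 = F \<phi>h \<psi>h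
        \<and> (oproj (ker_op DB B \<inter> ker_op (adj_dom DA A) (adj DA A)) (y0 - yt)) \<in> (ker_op DB B \<inter> ker_op (adj_dom DA A) (adj DA A)) \<and> (\<forall>\<theta>\<in>(ker_op DB B \<inter> ker_op (adj_dom DA A) (adj DA A)). G \<theta> \<le> G (oproj (ker_op DB B \<inter> ker_op (adj_dom DA A) (adj DA A)) (y0 - yt))) \<and> (norm (oproj (ker_op DB B \<inter> ker_op (adj_dom DA A) (adj DA A)) (y0 - yt)))\<^sup>2 = G (oproj (ker_op DB B \<inter> ker_op (adj_dom DA A) (adj DA A)) (y0 - yt)))"
proof -
  have k: "0 \<in> (ker_op DB B \<inter> ker_op (adj_dom DA A) (adj DA A))" using subspace_0[OF sK(1)] .
  have y0K: "oproj (ker_op DB B \<inter> ker_op (adj_dom DA A) (adj DA A)) y0 = 0"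
  proof (rule oproj_zero[OF sK])
    fix s assume "s \<in> (ker_op DB B \<inter> ker_op (adj_dom DA A) (adj DA A))"
    then have "inner s y0 = 0" using orthK1 y0 by blast
    then show "inner y0 s = 0" by (simp only: inner_commute)
  qed
  have h: "(let \<phi>h = red_inv DA A (oproj (ran_op DA A) yt);
           \<psi>h = red_adj_inv DB B (oproj (ran_op (adj_dom DB B) (adj DB B)) yt);
           F = (\<lambda>\<phi> \<psi>. (norm (0 - yt + A \<phi> + adj DB B \<psi>))\<^sup>2);
           G = (\<lambda>\<theta>. inner (2 *\<^sub>R (0 - yt) - \<theta>) \<theta>)
       in (oproj (ker_op DB B \<inter> ker_op (adj_dom DA A) (adj DA A)) (y0 - yt)) = 0 - oproj (ker_op DB B \<inter> ker_op (adj_dom DA A) (adj DA A)) yt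
        \<and> \<phi>h \<in> DA \<and> \<psi>h \<in> adj_dom DB B \<and> A \<phi>h + adj DB B \<psi>h = yt - oproj (ker_op DB B \<inter> ker_op (adj_dom DA A) (adj DA A)) yt
        \<and> (\<forall>\<phi>\<in>DA. \<forall>\<psi>\<in>adj_dom DB B. F \<phi>h \<psi>h \<le> F \<phi> \<psi>) \<and> (norm (oproj (ker_op DB B \<inter> ker_op (adj_dom DA A) (adj DA A)) (y0 - yt)))\<^sup>2 = F \<phi>h \<psi>h
        \<and> (oproj (ker_op DB B \<inter> ker_op (adj_dom DA A) (adj DA A)) (y0 - yt)) \<in> (ker_op DB B \<inter> ker_op (adj_dom DA A) (adj DA A)) \<and> (\<forall>\<theta>\<in>(ker_op DB B \<inter> ker_op (adj_dom DA A) (adj DA A)). G \<theta> \<le> G (oproj (ker_op DB B \<inter> ker_op (adj_dom DA A) (adj DA A)) (y0 - yt))) \<and> (norm (oproj (ker_op DB B \<inter> ker_op (adj_dom DA A) (adj DA A)) (y0 - yt)))\<^sup>2 = G (oproj (ker_op DB B \<inter> ker_op (adj_dom DA A) (adj DA A)) (y0 - yt)))" by (rule iv_gen[OF k y0K])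
  have e1: "\<And>u::'b. 0 - u = - u" by simp
  have e2: "\<And>t::'b. inner (2 *\<^sub>R (- yt) - t) t = - inner (2 *\<^sub>R yt + t) t"
    by (simp add: inner_diff_left inner_add_left)
  show ?thesis using h unfolding e1 e2 .
qed

end

theorem theorem4p7:
  fixes D0 :: "'h0::{real_inner,complete_space} set" and A0 :: "'h0 \<Rightarrow> 'h1::{real_inner,complete_space}"
    and D1 :: "'h1 set" and A1 :: "'h1 \<Rightarrow> 'h2::{real_inner,complete_space}"
    and D2 :: "'h2 set" and A2 :: "'h2 \<Rightarrow> 'h3::{real_inner,complete_space}"
    and D3 :: "'h3 set" and A3 :: "'h3 \<Rightarrow> 'h4::{real_inner,complete_space}"
    and f x xt :: 'h2 and g :: 'h1 and k :: 'h2 and yt :: 'h3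
  assumes op0: "closed_dd_op D0 A0" and op1: "closed_dd_op D1 A1"
    and op2: "closed_dd_op D2 A2" and op3: "closed_dd_op D3 A3"
    and cx0: "ran_op D0 A0 \<subseteq> ker_op D1 A1"
    and cx1: "ran_op D1 A1 \<subseteq> ker_op D2 A2"
    and cx2: "ran_op D2 A2 \<subseteq> ker_op D3 A3"
    and cl1: "closed (ran_op D1 A1)" and cl2: "closed (ran_op D2 A2)"
    and cl3: "closed (ran_op D3 A3)"
    and fdK2: "finite_dim_set (ker_op D2 A2 \<inter> ker_op (adj_dom D1 A1) (adj D1 A1))"
    and f: "f \<in> ran_op (adj_dom D2 A2) (adj D2 A2)"
    and g: "g \<in> ran_op (adj_dom D1 A1) (adj D1 A1)"
    and k: "k \<in> ker_op D2 A2 \<inter> ker_op (adj_dom D1 A1) (adj D1 A1)"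
    and xD: "x \<in> D2" "x \<in> adj_dom D1 A1" "A2 x \<in> adj_dom D2 A2"
    and xeq: "adj D2 A2 (A2 x) = f" "adj D1 A1 x = g"
      "oproj (ker_op D2 A2 \<inter> ker_op (adj_dom D1 A1) (adj D1 A1)) x = k"
  defines "K2 \<equiv> ker_op D2 A2 \<inter> ker_op (adj_dom D1 A1) (adj D1 A1)"
    and "K3 \<equiv> ker_op D3 A3 \<inter> ker_op (adj_dom D2 A2) (adj D2 A2)"
    and "RA1 \<equiv> ran_op D1 A1"
    and "RA2s \<equiv> ran_op (adj_dom D2 A2) (adj D2 A2)"
    and "RA2 \<equiv> ran_op D2 A2"
    and "RA3s \<equiv> ran_op (adj_dom D3 A3) (adj D3 A3)"
    and "y \<equiv> A2 x"
    and "e \<equiv> x - xt" and "h \<equiv> A2 x - yt"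
    and "eA1 \<equiv> oproj (ran_op D1 A1) (x - xt)"
    and "eA2s \<equiv> oproj (ran_op (adj_dom D2 A2) (adj D2 A2)) (x - xt)"
    and "eK2 \<equiv> oproj (ker_op D2 A2 \<inter> ker_op (adj_dom D1 A1) (adj D1 A1)) (x - xt)"
    and "hA2 \<equiv> oproj (ran_op D2 A2) (A2 x - yt)"
    and "hA3s \<equiv> oproj (ran_op (adj_dom D3 A3) (adj D3 A3)) (A2 x - yt)"
    and "hK3 \<equiv> oproj (ker_op D3 A3 \<inter> ker_op (adj_dom D2 A2) (adj D2 A2)) (A2 x - yt)"
  shows
   \<comment> \<open>(i)\<close>
   "(e = eA1 + eK2 + eA2s \<and> eA1 \<in> RA1 \<and> eK2 \<in> K2 \<and> eA2s \<in> RA2s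
      \<and> inner eA1 eK2 = 0 \<and> inner eA1 eA2s = 0 \<and> inner eK2 eA2s = 0
      \<and> (norm e)\<^sup>2 = (norm eA1)\<^sup>2 + (norm eK2)\<^sup>2 + (norm eA2s)\<^sup>2)
    \<and> (h = hA2 + hK3 + hA3s \<and> hA2 \<in> RA2 \<and> hK3 \<in> K3 \<and> hA3s \<in> RA3s
      \<and> inner hA2 hK3 = 0 \<and> inner hA2 hA3s = 0 \<and> inner hK3 hA3s = 0
      \<and> (norm h)\<^sup>2 = (norm hA2)\<^sup>2 + (norm hK3)\<^sup>2 + (norm hA3s)\<^sup>2)
   \<comment> \<open>(ii)\<close>
    \<and> stmt_ii D1 A1 g xt eA1
   \<comment> \<open>(iii)\<close>
    \<and> stmt_iii D2 A2 f x xt eA2s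
   \<comment> \<open>(iv)\<close>
    \<and> (let \<phi>h = red_inv D1 A1 (oproj RA1 xt);
           \<psi>h = red_adj_inv D2 A2 (oproj RA2s xt);
           F = (\<lambda>\<phi> \<psi>. (norm (k - xt + A1 \<phi> + adj D2 A2 \<psi>))\<^sup>2);
           G = (\<lambda>\<theta>. inner (2 *\<^sub>R (k - xt) - \<theta>) \<theta>)
       in eK2 = k - oproj K2 xt
        \<and> \<phi>h \<in> D1 \<and> \<psi>h \<in> adj_dom D2 A2 \<and> A1 \<phi>h + adj D2 A2 \<psi>h = xt - oproj K2 xt
        \<and> (\<forall>\<phi>\<in>D1. \<forall>\<psi>\<in>adj_dom D2 A2. F \<phi>h \<psi>h \<le> F \<phi> \<psi>) \<and> (norm eK2)\<^sup>2 = F \<phi>h \<psi>h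
        \<and> eK2 \<in> K2 \<and> (\<forall>\<theta>\<in>K2. G \<theta> \<le> G eK2) \<and> (norm eK2)\<^sup>2 = G eK2)
   \<comment> \<open>(v)\<close>
    \<and> (let c2 = best_const D2 A2;
           F = (\<lambda>\<zeta>. (c2 * norm (adj D2 A2 \<zeta> - f) + norm (\<zeta> - yt))\<^sup>2);
           G = (\<lambda>\<phi>. 2 * inner f \<phi> - inner (2 *\<^sub>R yt + A2 \<phi>) (A2 \<phi>));
           \<zeta>h = hA2 + yt;
           \<phi>h = red_inv D2 A2 hA2
       in hA2 = y - oproj RA2 yt
        \<and> \<zeta>h \<in> adj_dom D2 A2 \<and> adj D2 A2 \<zeta>h = f
        \<and> (\<forall>\<zeta>\<in>adj_dom D2 A2. F \<zeta>h \<le> F \<zeta>) \<and> (norm hA2)\<^sup>2 = F \<zeta>h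
        \<and> \<phi>h \<in> D2 \<and> (\<forall>\<phi>\<in>D2. G \<phi> \<le> G \<phi>h) \<and> (norm hA2)\<^sup>2 = G \<phi>h)
   \<comment> \<open>(vi)\<close>
    \<and> (let c3 = best_const D3 A3;
           F1 = (\<lambda>\<xi>. (c3 * norm (A3 \<xi>) + norm (\<xi> - yt))\<^sup>2);
           F2 = (\<lambda>\<xi>. (norm (\<xi> - yt))\<^sup>2);
           G = (\<lambda>\<psi>. - inner (2 *\<^sub>R yt + adj D3 A3 \<psi>) (adj D3 A3 \<psi>));
           \<xi>h = hA3s + yt;
           \<psi>h = red_adj_inv D3 A3 hA3s
       in hA3s = - oproj RA3s yt
        \<and> \<xi>h \<in> ker_op D3 A3
        \<and> (\<forall>\<xi>\<in>D3. F1 \<xi>h \<le> F1 \<xi>) \<and> (norm hA3s)\<^sup>2 = F1 \<xi>h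
        \<and> (\<forall>\<xi>\<in>ker_op D3 A3. F2 \<xi>h \<le> F2 \<xi>) \<and> (norm hA3s)\<^sup>2 = F2 \<xi>h
        \<and> \<psi>h \<in> adj_dom D3 A3 \<and> (\<forall>\<psi>\<in>adj_dom D3 A3. G \<psi> \<le> G \<psi>h) \<and> (norm hA3s)\<^sup>2 = G \<psi>h)
   \<comment> \<open>(vii)\<close>
    \<and> (let \<phi>h = red_inv D2 A2 (oproj RA2 yt);
           \<psi>h = red_adj_inv D3 A3 (oproj RA3s yt);
           F = (\<lambda>\<phi> \<psi>. (norm (- yt + A2 \<phi> + adj D3 A3 \<psi>))\<^sup>2);
           G = (\<lambda>\<theta>. - inner (2 *\<^sub>R yt + \<theta>) \<theta>)
       in hK3 = - oproj K3 yt
        \<and> \<phi>h \<in> D2 \<and> \<psi>h \<in> adj_dom D3 A3 \<and> A2 \<phi>h + adj D3 A3 \<psi>h = yt - oproj K3 yt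
        \<and> (\<forall>\<phi>\<in>D2. \<forall>\<psi>\<in>adj_dom D3 A3. F \<phi>h \<psi>h \<le> F \<phi> \<psi>) \<and> (norm hK3)\<^sup>2 = F \<phi>h \<psi>h
        \<and> hK3 \<in> K3 \<and> (\<forall>\<theta>\<in>K3. G \<theta> \<le> G hK3) \<and> (norm hK3)\<^sup>2 = G hK3)
   \<comment> \<open>final remarks\<close>
    \<and> (\<forall>xp. xt = k + xp \<and> (\<forall>u\<in>K2. inner u xp = 0) \<longrightarrow>
          eK2 = 0 \<and> stmt_ii D1 A1 g xp eA1 \<and> stmt_iii D2 A2 f x xp eA2s)
    \<and> ((\<forall>u\<in>K3. inner u yt = 0) \<longrightarrow> hK3 = 0)"
proof -
  interpret L1: cdo_cr D1 A1 by (intro cdo_cr.intro cdo.intro cdo_cr_axioms.intro op1 cl1)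
  interpret L2: cdo_cr D2 A2 by (intro cdo_cr.intro cdo.intro cdo_cr_axioms.intro op2 cl2)
  interpret L3: cdo_cr D3 A3 by (intro cdo_cr.intro cdo.intro cdo_cr_axioms.intro op3 cl3)
  interpret C12: cplx D1 A1 D2 A2
    by (intro cplx.intro cdo_cr.intro cdo.intro cdo_cr_axioms.intro cplx_axioms.intro op1 op2 cl1 cl2 cx1)
  interpret C23: cplx D2 A2 D3 A3
    by (intro cplx.intro cdo_cr.intro cdo.intro cdo_cr_axioms.intro cplx_axioms.intro op2 op3 cl2 cl3 cx2)
  have AxR: "A2 x \<in> ran_op D2 A2" unfolding ran_op_def using xD(1) by (rule imageI)
  have AxK: "A2 x \<in> ker_op D3 A3" using AxR cx2 by blast
  have i1: "(e = eA1 + eK2 + eA2s \<and> eA1 \<in> RA1 \<and> eK2 \<in> K2 \<and> eA2s \<in> RA2s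
      \<and> inner eA1 eK2 = 0 \<and> inner eA1 eA2s = 0 \<and> inner eK2 eA2s = 0
      \<and> (norm e)\<^sup>2 = (norm eA1)\<^sup>2 + (norm eK2)\<^sup>2 + (norm eA2s)\<^sup>2)"
    unfolding e_def eA1_def eK2_def eA2s_def RA1_def K2_def RA2s_def by (rule C12.decomp)
  have i2: "(h = hA2 + hK3 + hA3s \<and> hA2 \<in> RA2 \<and> hK3 \<in> K3 \<and> hA3s \<in> RA3s
      \<and> inner hA2 hK3 = 0 \<and> inner hA2 hA3s = 0 \<and> inner hK3 hA3s = 0
      \<and> (norm h)\<^sup>2 = (norm hA2)\<^sup>2 + (norm hK3)\<^sup>2 + (norm hA3s)\<^sup>2)"
    unfolding h_def hA2_def hK3_def hA3s_def RA2_def K3_def RA3s_def by (rule C23.decomp)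
  have ii: "stmt_ii D1 A1 g xt eA1" unfolding eA1_def by (rule L1.stmt_ii_gen[OF xD(2) xeq(2)])
  have iii: "stmt_iii D2 A2 f x xt eA2s" unfolding eA2s_def by (rule L2.stmt_iii_gen[OF xD(1) xD(3) xeq(1)])
  have iv: "(let \<phi>h = red_inv D1 A1 (oproj RA1 xt);
           \<psi>h = red_adj_inv D2 A2 (oproj RA2s xt);
           F = (\<lambda>\<phi> \<psi>. (norm (k - xt + A1 \<phi> + adj D2 A2 \<psi>))\<^sup>2);
           G = (\<lambda>\<theta>. inner (2 *\<^sub>R (k - xt) - \<theta>) \<theta>)
       in eK2 = k - oproj K2 xt
        \<and> \<phi>h \<in> D1 \<and> \<psi>h \<in> adj_dom D2 A2 \<and> A1 \<phi>h + adj D2 A2 \<psi>h = xt - oproj K2 xt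
        \<and> (\<forall>\<phi>\<in>D1. \<forall>\<psi>\<in>adj_dom D2 A2. F \<phi>h \<psi>h \<le> F \<phi> \<psi>) \<and> (norm eK2)\<^sup>2 = F \<phi>h \<psi>h
        \<and> eK2 \<in> K2 \<and> (\<forall>\<theta>\<in>K2. G \<theta> \<le> G eK2) \<and> (norm eK2)\<^sup>2 = G eK2)"
    unfolding eK2_def K2_def RA1_def RA2s_def by (rule C12.iv_gen[OF k xeq(3)])
  have v: "(let c2 = best_const D2 A2;
           F = (\<lambda>\<zeta>. (c2 * norm (adj D2 A2 \<zeta> - f) + norm (\<zeta> - yt))\<^sup>2);
           G = (\<lambda>\<phi>. 2 * inner f \<phi> - inner (2 *\<^sub>R yt + A2 \<phi>) (A2 \<phi>));
           \<zeta>h = hA2 + yt;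
           \<phi>h = red_inv D2 A2 hA2
       in hA2 = y - oproj RA2 yt
        \<and> \<zeta>h \<in> adj_dom D2 A2 \<and> adj D2 A2 \<zeta>h = f
        \<and> (\<forall>\<zeta>\<in>adj_dom D2 A2. F \<zeta>h \<le> F \<zeta>) \<and> (norm hA2)\<^sup>2 = F \<zeta>h
        \<and> \<phi>h \<in> D2 \<and> (\<forall>\<phi>\<in>D2. G \<phi> \<le> G \<phi>h) \<and> (norm hA2)\<^sup>2 = G \<phi>h)"
  proof -
    have sv: "stmt_ii D2 A2 f yt (oproj (ran_op D2 A2) (A2 x - yt))" by (rule L2.stmt_ii_gen[OF xD(3) xeq(1)])
    have ra: "red_adj_inv D2 A2 f = A2 x"
    proof (rule L2.red_adj_inv_eq)
      show "A2 x \<in> red_adj_dom D2 A2" unfolding red_adj_dom_def using xD(3) AxR by blast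
      show "adj D2 A2 (A2 x) = f" by (rule xeq(1))
    qed
    show ?thesis unfolding hA2_def y_def RA2_def Let_def using sv unfolding stmt_ii_def Let_def ra .
  qed
  have vi: "(let c3 = best_const D3 A3;
           F1 = (\<lambda>\<xi>. (c3 * norm (A3 \<xi>) + norm (\<xi> - yt))\<^sup>2);
           F2 = (\<lambda>\<xi>. (norm (\<xi> - yt))\<^sup>2);
           G = (\<lambda>\<psi>. - inner (2 *\<^sub>R yt + adj D3 A3 \<psi>) (adj D3 A3 \<psi>));
           \<xi>h = hA3s + yt;
           \<psi>h = red_adj_inv D3 A3 hA3s
       in hA3s = - oproj RA3s yt
        \<and> \<xi>h \<in> ker_op D3 A3
        \<and> (\<forall>\<xi>\<in>D3. F1 \<xi>h \<le> F1 \<xi>) \<and> (norm hA3s)\<^sup>2 = F1 \<xi>h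
        \<and> (\<forall>\<xi>\<in>ker_op D3 A3. F2 \<xi>h \<le> F2 \<xi>) \<and> (norm hA3s)\<^sup>2 = F2 \<xi>h
        \<and> \<psi>h \<in> adj_dom D3 A3 \<and> (\<forall>\<psi>\<in>adj_dom D3 A3. G \<psi> \<le> G \<psi>h) \<and> (norm hA3s)\<^sup>2 = G \<psi>h)"
    unfolding hA3s_def RA3s_def by (rule L3.vi_gen[OF AxK])
  have vii: "(let \<phi>h = red_inv D2 A2 (oproj RA2 yt);
           \<psi>h = red_adj_inv D3 A3 (oproj RA3s yt);
           F = (\<lambda>\<phi> \<psi>. (norm (- yt + A2 \<phi> + adj D3 A3 \<psi>))\<^sup>2);
           G = (\<lambda>\<theta>. - inner (2 *\<^sub>R yt + \<theta>) \<theta>)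
       in hK3 = - oproj K3 yt
        \<and> \<phi>h \<in> D2 \<and> \<psi>h \<in> adj_dom D3 A3 \<and> A2 \<phi>h + adj D3 A3 \<psi>h = yt - oproj K3 yt
        \<and> (\<forall>\<phi>\<in>D2. \<forall>\<psi>\<in>adj_dom D3 A3. F \<phi>h \<psi>h \<le> F \<phi> \<psi>) \<and> (norm hK3)\<^sup>2 = F \<phi>h \<psi>h
        \<and> hK3 \<in> K3 \<and> (\<forall>\<theta>\<in>K3. G \<theta> \<le> G hK3) \<and> (norm hK3)\<^sup>2 = G hK3)"
    unfolding hK3_def K3_def RA2_def RA3s_def by (rule C23.vii_gen[OF AxR])
  have fr1: "(\<forall>xp. xt = k + xp \<and> (\<forall>u\<in>K2. inner u xp = 0) \<longrightarrow>
          eK2 = 0 \<and> stmt_ii D1 A1 g xp eA1 \<and> stmt_iii D2 A2 f x xp eA2s)"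
  proof (intro allI impI)
    fix xp assume xp: "xt = k + xp \<and> (\<forall>u\<in>K2. inner u xp = 0)"
    have sk: "subspace K2" "closed K2" unfolding K2_def using C12.sK by auto
    have kK: "k \<in> K2" unfolding K2_def using k .
    have pk: "oproj K2 xt = k"
    proof (rule oproj_eq[OF sk kK])
      fix s assume "s \<in> K2"
      then have "inner s xp = 0" using xp by blast
      then show "inner (xt - k) s = 0" using xp by (simp add: inner_commute)
    qed
    have "eK2 = oproj K2 x - oproj K2 xt" unfolding eK2_def K2_def[symmetric] by (rule oproj_diff[OF sk])
    then have ek: "eK2 = 0" using pk xeq(3) unfolding K2_def by simp
    have exx: "x - xt = (x - xp) - k" using xp by simp
    have k1: "oproj (ran_op D1 A1) k = 0"
    proof (rule oproj_zero[OF L1.ranY])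
      fix s assume "s \<in> ran_op D1 A1"
      then show "inner k s = 0" using C12.orthK1 k by blast
    qed
    have k2: "oproj (ran_op (adj_dom D2 A2) (adj D2 A2)) k = 0"
    proof (rule oproj_zero[OF L2.ranS])
      fix s assume "s \<in> ran_op (adj_dom D2 A2) (adj D2 A2)"
      then show "inner k s = 0" using C12.orthK2 k by blast
    qed
    have e1: "eA1 = oproj (ran_op D1 A1) (x - xp)"
      unfolding eA1_def exx oproj_diff[OF L1.ranY, of "x - xp" k] k1 by simp
    have e2: "eA2s = oproj (ran_op (adj_dom D2 A2) (adj D2 A2)) (x - xp)"
      unfolding eA2s_def exx oproj_diff[OF L2.ranS, of "x - xp" k] k2 by simp
    have "stmt_ii D1 A1 g xp eA1" unfolding e1 by (rule L1.stmt_ii_gen[OF xD(2) xeq(2)])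
    moreover have "stmt_iii D2 A2 f x xp eA2s" unfolding e2 by (rule L2.stmt_iii_gen[OF xD(1) xD(3) xeq(1)])
    ultimately show "eK2 = 0 \<and> stmt_ii D1 A1 g xp eA1 \<and> stmt_iii D2 A2 f x xp eA2s" using ek by blast
  qed
  have fr2: "((\<forall>u\<in>K3. inner u yt = 0) \<longrightarrow> hK3 = 0)"
  proof
    assume yt: "\<forall>u\<in>K3. inner u yt = 0"
    have sk: "subspace K3" "closed K3" unfolding K3_def using C23.sK by auto
    have a: "oproj K3 yt = 0"
    proof (rule oproj_zero[OF sk])
      fix s assume "s \<in> K3"
      then show "inner yt s = 0" using yt by (simp add: inner_commute)
    qed
    have b: "oproj K3 (A2 x) = 0"
    proof (rule oproj_zero[OF sk])
      fix s assume "s \<in> K3"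
      then have "inner s (A2 x) = 0" using C23.orthK1 AxR unfolding K3_def by blast
      then show "inner (A2 x) s = 0" by (simp only: inner_commute)
    qed
    show "hK3 = 0" unfolding hK3_def K3_def[symmetric] oproj_diff[OF sk] a b by simp
  qed
  show ?thesis
    by (rule conjI[OF i1 conjI[OF i2 conjI[OF ii conjI[OF iii conjI[OF iv conjI[OF v conjI[OF vi conjI[OF vii conjI[OF fr1 fr2]]]]]]]]])
qed

end
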